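(* Let $\gamma,\sigma:[a,b]\to V$ be continuous paths of bounded variation. Let $\phi:\mathbb{N}\cup\{0\}\to\mathbb{R}$ be such that both $|\phi|$ and $|\phi_{+1}|$ satisfy: $\sum_kC^k|\cdot|(k)(k!)^{-2}<\infty$ for every $C>0$, where $\phi_{+1}(k)=\phi(k+1)$. Then the $\phi$- and $\phi_{+1}$-signature kernels of $\gamma$ and $\sigma$ are well defined and, for all $(s,t)\in[a,b]^2$, \[ K_\phi^{\gamma,\sigma}(s,t)=\phi(0)+\int_a^s\int_a^tK_{\phi_{+1}}^{\gamma,\sigma}(u,v)\,\langle d\gamma_u,d\sigma_v\rangle. \]
   Context: $V$ is a finite-dimensional real inner product space, $\langle\cdot,\cdot\rangle_k$ the induced Hilbert–Schmidt inner product on $V^{\otimes k}$. Signature: $S(\gamma)^0=1$, $S(\gamma)^k_{s,t}=\int_{s<u_1<\dots<u_k<t}d\gamma_{u_1}\otimes\cdots\otimes d\gamma_{u_k}$. For $\phi$ real-valued, $K_\phi^{\gamma,\sigma}(s,t)=\sum_{k\ge0}\phi(k)\langle S(\gamma)^k_{a,s},S(\sigma)^k_{a,t}\rangle_k$. *)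

theory Defs
  imports "HOL-Analysis.Analysis"
begin

definition is_partition :: "real list \<Rightarrow> real \<Rightarrow> real \<Rightarrow> bool" where
  "is_partition p c d \<longleftrightarrow> p \<noteq> [] \<and> hd p = c \<and> last p = d \<and> sorted_wrt (<) p"

definition fine_partition :: "real \<Rightarrow> real list \<Rightarrow> bool" where
  "fine_partition \<delta> p \<longleftrightarrow> (\<forall>i < length p - 1. p ! Suc i - p ! i < \<delta>)"

definition partition_tags :: "real list \<Rightarrow> (nat \<Rightarrow> real) \<Rightarrow> bool" where
  "partition_tags p \<tau> \<longleftrightarrow> (\<forall>i < length p - 1. p ! i \<le> \<tau> i \<and> \<tau> i \<le> p ! Suc i)"

definition bounded_variation_on :: "(real \<Rightarrow> 'v::real_normed_vector) \<Rightarrow> real \<Rightarrow> real \<Rightarrow> bool" where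
  "bounded_variation_on \<gamma> a b \<longleftrightarrow>
     (\<exists>M. \<forall>p. is_partition p a b \<longrightarrow> (\<Sum>i < length p - 1. norm (\<gamma> (p ! Suc i) - \<gamma> (p ! i))) \<le> M)"

definition rs_sum :: "(real \<Rightarrow> real) \<Rightarrow> (real \<Rightarrow> real) \<Rightarrow> real list \<Rightarrow> (nat \<Rightarrow> real) \<Rightarrow> real" where
  "rs_sum f g p \<tau> = (\<Sum>i < length p - 1. f (\<tau> i) * (g (p ! Suc i) - g (p ! i)))"

definition has_rs_integral :: "(real \<Rightarrow> real) \<Rightarrow> (real \<Rightarrow> real) \<Rightarrow> real \<Rightarrow> real \<Rightarrow> real \<Rightarrow> bool" where
  "has_rs_integral f g c d I \<longleftrightarrow>
     (\<forall>\<epsilon>>0. \<exists>\<delta>>0. \<forall>p \<tau>. is_partition p c d \<and> fine_partition \<delta> p \<and> partition_tags p \<tau>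
        \<longrightarrow> \<bar>rs_sum f g p \<tau> - I\<bar> < \<epsilon>)"

definition rs_integral :: "(real \<Rightarrow> real) \<Rightarrow> (real \<Rightarrow> real) \<Rightarrow> real \<Rightarrow> real \<Rightarrow> real" where
  "rs_integral f g c d = (THE I. has_rs_integral f g c d I)"

definition rs2_sum :: "(real \<Rightarrow> real \<Rightarrow> real) \<Rightarrow> (real \<Rightarrow> 'v::real_inner) \<Rightarrow> (real \<Rightarrow> 'v)
    \<Rightarrow> real list \<Rightarrow> (nat \<Rightarrow> real) \<Rightarrow> real list \<Rightarrow> (nat \<Rightarrow> real) \<Rightarrow> real" where
  "rs2_sum K \<gamma> \<sigma> p \<tau> q \<rho> =
     (\<Sum>i < length p - 1. \<Sum>j < length q - 1.
        K (\<tau> i) (\<rho> j) * ((\<gamma> (p ! Suc i) - \<gamma> (p ! i)) \<bullet> (\<sigma> (q ! Suc j) - \<sigma> (q ! j))))"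

definition has_rs2_integral :: "(real \<Rightarrow> real \<Rightarrow> real) \<Rightarrow> (real \<Rightarrow> 'v::real_inner) \<Rightarrow> (real \<Rightarrow> 'v)
    \<Rightarrow> real \<Rightarrow> real \<Rightarrow> real \<Rightarrow> real \<Rightarrow> real \<Rightarrow> bool" where
  "has_rs2_integral K \<gamma> \<sigma> c d e f I \<longleftrightarrow>
     (\<forall>\<epsilon>>0. \<exists>\<delta>>0. \<forall>p \<tau> q \<rho>.
        is_partition p c d \<and> fine_partition \<delta> p \<and> partition_tags p \<tau> \<and>
        is_partition q e f \<and> fine_partition \<delta> q \<and> partition_tags q \<rho>
        \<longrightarrow> \<bar>rs2_sum K \<gamma> \<sigma> p \<tau> q \<rho> - I\<bar> < \<epsilon>)"

text \<open>Coordinates of the level-k signature w.r.t. the orthonormal basis \<open>Basis\<close> of V: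
  for a word [e_1,...,e_k] of basis vectors, \<open>sig_coord \<gamma> a [e_1,...,e_k] t\<close> is
  \<open>\<integral>_{a<u_1<...<u_k<t} d<\<gamma>,e_1>_{u_1} ... d<\<gamma>,e_k>_{u_k}\<close>, defined by iterated
  Riemann--Stieltjes integration (peeling off the last letter). \<open>sig_rev\<close> takes the reversed word.\<close>
fun sig_rev :: "(real \<Rightarrow> 'v::euclidean_space) \<Rightarrow> real \<Rightarrow> 'v list \<Rightarrow> real \<Rightarrow> real" where
  "sig_rev \<gamma> a [] t = 1"
| "sig_rev \<gamma> a (e # w) t = rs_integral (\<lambda>u. sig_rev \<gamma> a w u) (\<lambda>u. \<gamma> u \<bullet> e) a t"

definition sig_coord :: "(real \<Rightarrow> 'v::euclidean_space) \<Rightarrow> real \<Rightarrow> 'v list \<Rightarrow> real \<Rightarrow> real" where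
  "sig_coord \<gamma> a w t = sig_rev \<gamma> a (rev w) t"

text \<open>Words of length k in the basis vectors (index the orthonormal basis of V^{\<otimes>k}).\<close>
definition words :: "nat \<Rightarrow> 'v::euclidean_space list set" where
  "words k = {w. length w = k \<and> set w \<subseteq> Basis}"

text \<open>Hilbert--Schmidt inner product \<open><S(\<gamma>)^k_{a,s}, S(\<sigma>)^k_{a,t}>_k\<close>.\<close>
definition sig_inner :: "nat \<Rightarrow> (real \<Rightarrow> 'v::euclidean_space) \<Rightarrow> (real \<Rightarrow> 'v) \<Rightarrow> real \<Rightarrow> real \<Rightarrow> real \<Rightarrow> real" where
  "sig_inner k \<gamma> \<sigma> a s t = (\<Sum>w \<in> words k. sig_coord \<gamma> a w s * sig_coord \<sigma> a w t)"

definition sig_kernel_terms :: "(nat \<Rightarrow> real) \<Rightarrow> (real \<Rightarrow> 'v::euclidean_space) \<Rightarrow> (real \<Rightarrow> 'v) \<Rightarrow> real \<Rightarrow> real \<Rightarrow> real \<Rightarrow> nat \<Rightarrow> real" where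
  "sig_kernel_terms \<phi> \<gamma> \<sigma> a s t k = \<phi> k * sig_inner k \<gamma> \<sigma> a s t"

definition sig_kernel :: "(nat \<Rightarrow> real) \<Rightarrow> (real \<Rightarrow> 'v::euclidean_space) \<Rightarrow> (real \<Rightarrow> 'v) \<Rightarrow> real \<Rightarrow> real \<Rightarrow> real \<Rightarrow> real" where
  "sig_kernel \<phi> \<gamma> \<sigma> a s t = (\<Sum>k. sig_kernel_terms \<phi> \<gamma> \<sigma> a s t k)"

end

theory Submission
  imports Defs
begin

lemma part_basic:
  assumes "is_partition p c d"
  shows "length p \<ge> 1" "p ! 0 = c" "p ! (length p - 1) = d"
    "\<And>i j. i < j \<Longrightarrow> j < length p \<Longrightarrow> p ! i < p ! j"
    "\<And>i j. i \<le> j \<Longrightarrow> j < length p \<Longrightarrow> p ! i \<le> p ! j"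
    "\<And>i. i < length p \<Longrightarrow> c \<le> p ! i \<and> p ! i \<le> d"
    "c \<le> d"
proof -
  have ne: "p \<noteq> []" and h: "hd p = c" and l: "last p = d" and s: "sorted_wrt (<) p"
    using assms unfolding is_partition_def by auto
  show 1: "length p \<ge> 1" using ne by (cases p) auto
  show 2: "p ! 0 = c" using ne h by (simp add: hd_conv_nth)
  show 3: "p ! (length p - 1) = d" using ne l by (simp add: last_conv_nth)
  show 4: "\<And>i j. i < j \<Longrightarrow> j < length p \<Longrightarrow> p ! i < p ! j"
    using s by (simp add: sorted_wrt_iff_nth_less)
  show 5: "\<And>i j. i \<le> j \<Longrightarrow> j < length p \<Longrightarrow> p ! i \<le> p ! j"
    using 4 by (metis le_less)
  show 6: "\<And>i. i < length p \<Longrightarrow> c \<le> p ! i \<and> p ! i \<le> d"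
  proof -
    fix i assume i: "i < length p"
    have "p ! 0 \<le> p ! i" using 5[of 0 i] i by simp
    moreover have "p ! i \<le> p ! (length p - 1)" using 5[of i "length p - 1"] i by simp
    ultimately show "c \<le> p ! i \<and> p ! i \<le> d" using 2 3 by simp
  qed
  show "c \<le> d" using 6[of 0] 1 2 ne by auto
qed

lemma part_inj:
  assumes "is_partition p c d" "i < length p" "j < length p" "p ! i = p ! j"
  shows "i = j"
  using part_basic(4)[OF assms(1)] assms(2-4) by (metis less_irrefl nat_neq_iff)

lemma left_tags: "is_partition p c d \<Longrightarrow> partition_tags p (\<lambda>i. p ! i)"
  unfolding partition_tags_def using part_basic(5)[of p c d] by auto

lemma tag_in:
  assumes "is_partition p c d" "partition_tags p \<tau>" "i < length p - 1"
  shows "p ! i \<le> \<tau> i" "\<tau> i \<le> p ! Suc i" "c \<le> \<tau> i" "\<tau> i \<le> d"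
proof -
  show 1: "p ! i \<le> \<tau> i" "\<tau> i \<le> p ! Suc i" using assms unfolding partition_tags_def by auto
  show "c \<le> \<tau> i" using 1 part_basic(6)[OF assms(1), of i] assms(3) by linarith
  show "\<tau> i \<le> d" using 1 part_basic(6)[OF assms(1), of "Suc i"] assms(3) by linarith
qed

lemma fine_mono: "fine_partition \<delta> p \<Longrightarrow> \<delta> \<le> \<delta>' \<Longrightarrow> fine_partition \<delta>' p"
  unfolding fine_partition_def by force

lemma exists_fine:
  assumes "c \<le> d" "\<delta> > 0"
  shows "\<exists>p. is_partition p c d \<and> fine_partition \<delta> p"
proof (cases "c = d")
  case True
  then show ?thesis by (intro exI[of _ "[c]"]) (simp add: is_partition_def fine_partition_def)
next
  case False
  hence cd: "c < d" using assms by simp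
  define n :: nat where "n = nat \<lceil>(d - c) / \<delta>\<rceil> + 1"
  have npos: "n \<ge> 1" unfolding n_def by simp
  have "real n > (d - c) / \<delta>" unfolding n_def by linarith
  hence nd: "(d - c) < \<delta> * real n" using assms(2) by (simp add: field_simps)
  define p where "p = map (\<lambda>i. c + (d - c) * real i / real n) [0..<Suc n]"
  have len: "length p = Suc n" unfolding p_def by simp
  have nth: "\<And>i. i < Suc n \<Longrightarrow> p ! i = c + (d - c) * real i / real n"
    unfolding p_def by (simp del: upt_Suc)
  have "is_partition p c d"
    unfolding is_partition_def
  proof (intro conjI)
    show "p \<noteq> []" using len by auto
    have "p \<noteq> []" using len by auto
    then show "hd p = c" using nth[of 0] len by (simp add: hd_conv_nth)
    have "p \<noteq> []" using len by auto
    then show "last p = d" using nth[of n] len npos by (simp add: last_conv_nth)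
    show "sorted_wrt (<) p"
      unfolding sorted_wrt_iff_nth_less len
    proof (intro allI impI)
      fix i j assume "i < j" "j < Suc n"
      then show "p ! i < p ! j" using nth cd npos
        by (simp add: divide_strict_right_mono mult_strict_left_mono)
    qed
  qed
  moreover have "fine_partition \<delta> p"
    unfolding fine_partition_def len
  proof (intro allI impI)
    fix i assume "i < Suc n - 1"
    hence "p ! Suc i - p ! i = (d - c) * real (Suc i) / real n - (d - c) * real i / real n"
      using nth[of i] nth[of "Suc i"] by simp
    also have "\<dots> = (d - c) / real n" using npos by (simp add: field_simps)
    also have "\<dots> < \<delta>" using nd npos by (simp add: field_simps)
    finally show "p ! Suc i - p ! i < \<delta>" .
  qed
  ultimately show ?thesis by blast
qed

lemma sum_split_nat: "(\<Sum>i<(m::nat)+n. f i) = (\<Sum>i<m. f i) + (\<Sum>j<n. f (m + j))"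
  by (induction n) (auto simp: add.assoc)

lemma append_point_partition:
  assumes "is_partition p a x" "x < y"
  shows "is_partition (p @ [y]) a y"
proof -
  have "\<forall>z\<in>set p. z < y"
    using part_basic(6)[OF assms(1)] assms(2) by (auto simp: in_set_conv_nth) (smt (verit))
  then show ?thesis using assms(1) unfolding is_partition_def
    by (auto simp: sorted_wrt_append)
qed

lemma append_point_sum:
  assumes "p \<noteq> []"
  shows "(\<Sum>i<length (p @ [y]) - 1. F i ((p @ [y]) ! i) ((p @ [y]) ! Suc i))
       = (\<Sum>i<length p - 1. F i (p ! i) (p ! Suc i)) + F (length p - 1) (last p) y"
proof -
  obtain m where m: "length p = Suc m" using assms by (cases p) auto
  have "(\<Sum>i<length (p @ [y]) - 1. F i ((p @ [y]) ! i) ((p @ [y]) ! Suc i))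
      = (\<Sum>i<Suc m. F i ((p @ [y]) ! i) ((p @ [y]) ! Suc i))" using m by simp
  also have "\<dots> = (\<Sum>i<m. F i (p ! i) (p ! Suc i)) + F m (p ! m) y"
    using m by (simp add: nth_append)
  also have "p ! m = last p" using m assms by (simp add: last_conv_nth)
  finally show ?thesis using m by simp
qed

lemma concat_nth:
  assumes P: "is_partition P a x" and Q: "is_partition Q x y"
    and i: "i \<le> (length P - 1) + (length Q - 1)"
  shows "(P @ tl Q) ! i = (if i < length P - 1 then P ! i else Q ! (i - (length P - 1)))"
proof -
  have lP: "length P \<ge> 1" and lQ: "length Q \<ge> 1" using part_basic(1) P Q by auto
  show ?thesis
  proof (cases "i < length P")
    case True
    then have e: "(P @ tl Q) ! i = P ! i" by (simp add: nth_append)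
    show ?thesis
    proof (cases "i < length P - 1")
      case True then show ?thesis using e by simp
    next
      case False
      then have "i = length P - 1" using \<open>i < length P\<close> by simp
      then show ?thesis using e part_basic(2)[OF Q] part_basic(3)[OF P] by simp
    qed
  next
    case False
    then have "(P @ tl Q) ! i = tl Q ! (i - length P)" by (simp add: nth_append)
    also have "\<dots> = Q ! Suc (i - length P)" using i lP lQ False by (intro nth_tl) auto
    also have "Suc (i - length P) = i - (length P - 1)" using False lP by simp
    finally have "(P @ tl Q) ! i = Q ! (i - (length P - 1))" .
    moreover have "\<not> i < length P - 1" using False by simp
    ultimately show ?thesis by simp
  qed
qed

lemma concat_partition:
  assumes P: "is_partition P a x" and Q: "is_partition Q x y"
  shows "is_partition (P @ tl Q) a y" "length (P @ tl Q) - 1 = (length P - 1) + (length Q - 1)"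
proof -
  have lP: "length P \<ge> 1" and lQ: "length Q \<ge> 1" using part_basic(1) P Q by auto
  show len: "length (P @ tl Q) - 1 = (length P - 1) + (length Q - 1)" using lP lQ by simp
  obtain q0 qs where Qe: "Q = q0 # qs" using lQ by (cases Q) auto
  have q0: "q0 = x" using Q Qe unfolding is_partition_def by simp
  have sQ0: "sorted_wrt (<) Q" using Q unfolding is_partition_def by simp
  have sQ: "sorted_wrt (<) (q0 # qs)" using sQ0 Qe by simp
  have "\<forall>z\<in>set P. z \<le> x"
    using part_basic(6)[OF P] by (auto simp: in_set_conv_nth)
  moreover have "\<forall>z\<in>set qs. x < z" using sQ q0 by auto
  ultimately have s: "sorted_wrt (<) (P @ tl Q)" using P sQ Qe unfolding is_partition_def
    by (auto simp: sorted_wrt_append intro: le_less_trans)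
  have hd: "hd (P @ tl Q) = a" using P unfolding is_partition_def by simp
  have "last (P @ tl Q) = y"
  proof (cases "qs = []")
    case True
    then have "x = y" using Q Qe q0 unfolding is_partition_def by simp
    then show ?thesis using True Qe P unfolding is_partition_def by simp
  next
    case False
    then show ?thesis using Qe Q unfolding is_partition_def by (simp add: last_ConsR)
  qed
  then show "is_partition (P @ tl Q) a y" using s hd P unfolding is_partition_def by simp
qed

lemma concat_sum:
  assumes P: "is_partition P a x" and Q: "is_partition Q x y"
  shows "(\<Sum>i<length (P @ tl Q) - 1. F ((P @ tl Q) ! i) ((P @ tl Q) ! Suc i))
       = (\<Sum>i<length P - 1. F (P ! i) (P ! Suc i)) + (\<Sum>j<length Q - 1. F (Q ! j) (Q ! Suc j))"
proof -
  define m where "m = length P - 1"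
  define n where "n = length Q - 1"
  have lP: "length P = Suc m" and lQ: "length Q = Suc n"
    using part_basic(1)[OF P] part_basic(1)[OF Q] unfolding m_def n_def by auto
  have len: "length (P @ tl Q) - 1 = m + n" using concat_partition(2)[OF P Q] m_def n_def by simp
  have cn: "\<And>i. i \<le> m + n \<Longrightarrow> (P @ tl Q) ! i = (if i < m then P ! i else Q ! (i - m))"
    using concat_nth[OF P Q] m_def n_def by simp
  have Pm: "P ! m = Q ! 0" using part_basic(2)[OF Q] part_basic(3)[OF P] m_def by simp
  have "(\<Sum>i<length (P @ tl Q) - 1. F ((P @ tl Q) ! i) ((P @ tl Q) ! Suc i))
      = (\<Sum>i<m. F ((P @ tl Q) ! i) ((P @ tl Q) ! Suc i)) + (\<Sum>j<n. F ((P @ tl Q) ! (m + j)) ((P @ tl Q) ! Suc (m + j)))"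
    unfolding len by (rule sum_split_nat)
  also have "(\<Sum>i<m. F ((P @ tl Q) ! i) ((P @ tl Q) ! Suc i)) = (\<Sum>i<m. F (P ! i) (P ! Suc i))"
  proof (rule sum.cong)
    fix i assume "i \<in> {..<m}"
    then have i: "i < m" by simp
    have "(P @ tl Q) ! i = P ! i" using cn[of i] i by simp
    moreover have "(P @ tl Q) ! Suc i = P ! Suc i"
    proof (cases "Suc i < m")
      case True then show ?thesis using cn[of "Suc i"] i by simp
    next
      case False then have "Suc i = m" using i by simp
      then show ?thesis using cn[of "Suc i"] Pm by simp
    qed
    ultimately show "F ((P @ tl Q) ! i) ((P @ tl Q) ! Suc i) = F (P ! i) (P ! Suc i)" by simp
  qed simp
  also have "(\<Sum>j<n. F ((P @ tl Q) ! (m + j)) ((P @ tl Q) ! Suc (m + j))) = (\<Sum>j<n. F (Q ! j) (Q ! Suc j))"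
  proof (rule sum.cong)
    fix j assume "j \<in> {..<n}"
    then show "F ((P @ tl Q) ! (m + j)) ((P @ tl Q) ! Suc (m + j)) = F (Q ! j) (Q ! Suc j)"
      using cn[of "m + j"] cn[of "Suc (m + j)"] by (simp add: Suc_diff_le)
  qed simp
  finally show ?thesis unfolding m_def n_def .
qed

lemma concat_fine:
  assumes P: "is_partition P a x" and Q: "is_partition Q x y"
    and "fine_partition \<delta> P" "fine_partition \<delta> Q"
  shows "fine_partition \<delta> (P @ tl Q)"
proof -
  define m where "m = length P - 1"
  define n where "n = length Q - 1"
  have len: "length (P @ tl Q) - 1 = m + n" using concat_partition(2)[OF P Q] m_def n_def by simp
  have cn: "\<And>i. i \<le> m + n \<Longrightarrow> (P @ tl Q) ! i = (if i < m then P ! i else Q ! (i - m))"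
    using concat_nth[OF P Q] m_def n_def by simp
  have Pm: "P ! m = Q ! 0" using part_basic(2)[OF Q] part_basic(3)[OF P] m_def by simp
  show ?thesis unfolding fine_partition_def len
  proof (intro allI impI)
    fix i assume i: "i < m + n"
    show "(P @ tl Q) ! Suc i - (P @ tl Q) ! i < \<delta>"
    proof (cases "i < m")
      case True
      have "(P @ tl Q) ! Suc i = P ! Suc i"
      proof (cases "Suc i < m")
        case True then show ?thesis using cn[of "Suc i"] i by simp
      next
        case False then have "Suc i = m" using \<open>i < m\<close> by simp
        then show ?thesis using cn[of "Suc i"] Pm by simp
      qed
      then show ?thesis using cn[of i] True assms(3) i unfolding fine_partition_def m_def by auto
    next
      case False
      then show ?thesis using cn[of i] cn[of "Suc i"] i assms(4) unfolding fine_partition_def n_def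
        by (auto simp: Suc_diff_le)
    qed
  qed
qed

definition vsum :: "(real \<Rightarrow> 'v::real_normed_vector) \<Rightarrow> real list \<Rightarrow> real" where
  "vsum g p = (\<Sum>i<length p - 1. norm (g (p ! Suc i) - g (p ! i)))"

lemma vsum_nonneg: "vsum g p \<ge> 0"
  unfolding vsum_def by (simp add: sum_nonneg)

lemma vsum_restrict:
  assumes M: "\<forall>p. is_partition p a b \<longrightarrow> vsum g p \<le> M"
    and p: "is_partition p a t" and t: "t \<le> b"
  shows "vsum g p \<le> M"
proof (cases "t = b")
  case True then show ?thesis using M p by simp
next
  case False
  then have tb: "t < b" using t by simp
  have pp: "is_partition (p @ [b]) a b" by (rule append_point_partition[OF p tb])
  have ne: "p \<noteq> []" using p unfolding is_partition_def by simp
  have "vsum g (p @ [b]) = vsum g p + norm (g b - g (last p))"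
    unfolding vsum_def using append_point_sum[OF ne, of "\<lambda>i u v. norm (g v - g u)" b] by simp
  then have "vsum g p \<le> vsum g (p @ [b])" by simp
  also have "\<dots> \<le> M" using M pp by simp
  finally show ?thesis .
qed

lemma vsum_inner_le:
  fixes \<gamma> :: "real \<Rightarrow> 'v::euclidean_space"
  assumes "e \<in> Basis"
  shows "vsum (\<lambda>u. \<gamma> u \<bullet> e) p \<le> vsum \<gamma> p"
  unfolding vsum_def
proof (rule sum_mono)
  fix i
  have "norm (\<gamma> (p ! Suc i) \<bullet> e - \<gamma> (p ! i) \<bullet> e) = \<bar>(\<gamma> (p ! Suc i) - \<gamma> (p ! i)) \<bullet> e\<bar>"
    by (simp add: inner_diff_left)
  also have "\<dots> \<le> norm (\<gamma> (p ! Suc i) - \<gamma> (p ! i))" by (rule Basis_le_norm[OF assms])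
  finally show "norm (\<gamma> (p ! Suc i) \<bullet> e - \<gamma> (p ! i) \<bullet> e) \<le> norm (\<gamma> (p ! Suc i) - \<gamma> (p ! i))" .
qed

lemma refine_bound:
  fixes f g :: "real \<Rightarrow> real"
  assumes P: "is_partition P c d" and R: "is_partition R c d" and sub: "set P \<subseteq> set R"
    and tP: "partition_tags P \<tau>" and tR: "partition_tags R \<rho>"
    and H: "\<And>i x. i < length P - 1 \<Longrightarrow> P ! i \<le> x \<Longrightarrow> x \<le> P ! Suc i \<Longrightarrow> \<bar>f (\<tau> i) - f x\<bar> \<le> \<eta>"
  shows "\<bar>rs_sum f g P \<tau> - rs_sum f g R \<rho>\<bar> \<le> \<eta> * vsum g R"
proof -
  define m where "m = length P - 1"
  define n where "n = length R - 1"
  have lP: "length P = Suc m" and lR: "length R = Suc n"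
    using part_basic(1)[OF P] part_basic(1)[OF R] unfolding m_def n_def by auto
  have ex: "\<And>i. i < length P \<Longrightarrow> \<exists>j. j < length R \<and> R ! j = P ! i"
  proof -
    fix i assume "i < length P"
    then have "P ! i \<in> set R" using sub nth_mem by blast
    then show "\<exists>j. j < length R \<and> R ! j = P ! i" by (simp add: in_set_conv_nth)
  qed
  define A where "A i = (THE j. j < length R \<and> R ! j = P ! i)" for i
  have A: "A i < length R \<and> R ! (A i) = P ! i" if iP: "i < length P" for i
  proof -
    obtain j where j: "j < length R" "R ! j = P ! i" using ex[OF iP] by blast
    have "\<exists>!j. j < length R \<and> R ! j = P ! i"
    proof (rule ex1I[of _ j])
      show "j < length R \<and> R ! j = P ! i" using j by simp
      fix j' assume "j' < length R \<and> R ! j' = P ! i"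
      then show "j' = j" using part_inj[OF R, of j' j] j by simp
    qed
    then show ?thesis unfolding A_def by (rule theI')
  qed
  have Amono: "A i < A i'" if "i < i'" "i' < length P" for i i'
  proof (rule ccontr)
    assume "\<not> A i < A i'"
    then have "R ! (A i') \<le> R ! (A i)" using part_basic(5)[OF R, of "A i'" "A i"] A[of i] that by simp
    then have "P ! i' \<le> P ! i" using A[of i] A[of i'] that by simp
    moreover have "P ! i < P ! i'" using part_basic(4)[OF P] that by simp
    ultimately show False by simp
  qed
  have A0: "A 0 = 0"
    using A[of 0] part_basic(2)[OF P] part_basic(2)[OF R] part_inj[OF R, of "A 0" 0] lP lR by simp
  have Am: "A m = n"
    using A[of m] part_basic(3)[OF P] part_basic(3)[OF R] part_inj[OF R, of "A m" n] lP lR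
    unfolding m_def n_def by simp
  have Amono': "A i \<le> A (Suc i)" if "i < m" for i using Amono[of i "Suc i"] that lP by simp
  have block: "(\<Sum>j\<in>{A 0..<A k}. F j) = (\<Sum>i<k. \<Sum>j\<in>{A i..<A (Suc i)}. F j)" if "k \<le> m" for k F
    using that
  proof (induction k)
    case 0 then show ?case by simp
  next
    case (Suc k)
    have "A 0 \<le> A k" using A0 by simp
    moreover have "A k \<le> A (Suc k)" using Amono' Suc.prems by simp
    ultimately have "(\<Sum>j\<in>{A 0..<A (Suc k)}. F j) = (\<Sum>j\<in>{A 0..<A k}. F j) + (\<Sum>j\<in>{A k..<A (Suc k)}. F j)"
      by (simp add: sum.atLeastLessThan_concat)
    then show ?case using Suc by simp
  qed
  have blocks: "(\<Sum>j<n. F j) = (\<Sum>i<m. \<Sum>j\<in>{A i..<A (Suc i)}. F j)" for F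
    using block[of m F] A0 Am by (simp add: atLeast0LessThan)
  define D where "D j = g (R ! Suc j) - g (R ! j)" for j
  have tel: "g (P ! Suc i) - g (P ! i) = (\<Sum>j\<in>{A i..<A (Suc i)}. D j)" if "i < m" for i
  proof -
    have "(\<Sum>j\<in>{A i..<A (Suc i)}. D j) = g (R ! A (Suc i)) - g (R ! A i)"
      unfolding D_def using sum_Suc_diff'[OF Amono'[OF that], of "\<lambda>j. g (R ! j)"] by simp
    then show ?thesis using A[of i] A[of "Suc i"] that lP by simp
  qed
  have inblock: "P ! i \<le> \<rho> j \<and> \<rho> j \<le> P ! Suc i \<and> j < n"
    if i: "i < m" and j: "A i \<le> j" "j < A (Suc i)" for i j
  proof -
    have jn: "j < n" using j Am Amono[of "Suc i" m] i lP by (cases "Suc i = m") auto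
    have "P ! i = R ! A i" using A[of i] i lP by simp
    also have "\<dots> \<le> R ! j" using part_basic(5)[OF R] j jn lR by simp
    also have "\<dots> \<le> \<rho> j" using tag_in(1)[OF R tR] jn n_def by simp
    finally have 1: "P ! i \<le> \<rho> j" .
    have "\<rho> j \<le> R ! Suc j" using tag_in(2)[OF R tR] jn n_def by simp
    also have "\<dots> \<le> R ! A (Suc i)"
    proof (rule part_basic(5)[OF R])
      show "Suc j \<le> A (Suc i)" using j by simp
      show "A (Suc i) < length R" using A[of "Suc i"] i lP by simp
    qed
    also have "\<dots> = P ! Suc i" using A[of "Suc i"] i lP by simp
    finally show ?thesis using 1 jn by simp
  qed
  have "rs_sum f g P \<tau> = (\<Sum>i<m. \<Sum>j\<in>{A i..<A (Suc i)}. f (\<tau> i) * D j)"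
    unfolding rs_sum_def m_def[symmetric] using tel by (simp add: sum_distrib_left)
  moreover have "rs_sum f g R \<rho> = (\<Sum>i<m. \<Sum>j\<in>{A i..<A (Suc i)}. f (\<rho> j) * D j)"
    unfolding rs_sum_def n_def[symmetric] D_def[symmetric] by (rule blocks)
  ultimately have "rs_sum f g P \<tau> - rs_sum f g R \<rho> = (\<Sum>i<m. \<Sum>j\<in>{A i..<A (Suc i)}. (f (\<tau> i) - f (\<rho> j)) * D j)"
    by (simp add: sum_subtractf left_diff_distrib)
  then have "\<bar>rs_sum f g P \<tau> - rs_sum f g R \<rho>\<bar> \<le> (\<Sum>i<m. \<Sum>j\<in>{A i..<A (Suc i)}. \<bar>(f (\<tau> i) - f (\<rho> j)) * D j\<bar>)"
  proof -
    have "\<bar>\<Sum>i<m. \<Sum>j\<in>{A i..<A (Suc i)}. (f (\<tau> i) - f (\<rho> j)) * D j\<bar>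
        \<le> (\<Sum>i<m. \<bar>\<Sum>j\<in>{A i..<A (Suc i)}. (f (\<tau> i) - f (\<rho> j)) * D j\<bar>)" by (rule sum_abs)
    also have "\<dots> \<le> (\<Sum>i<m. \<Sum>j\<in>{A i..<A (Suc i)}. \<bar>(f (\<tau> i) - f (\<rho> j)) * D j\<bar>)"
      by (intro sum_mono sum_abs)
    finally show ?thesis by (simp only: \<open>rs_sum f g P \<tau> - rs_sum f g R \<rho> = _\<close>)
  qed
  also have "\<dots> \<le> (\<Sum>i<m. \<Sum>j\<in>{A i..<A (Suc i)}. \<eta> * \<bar>D j\<bar>)"
  proof (intro sum_mono)
    fix i j assume i: "i \<in> {..<m}" and j: "j \<in> {A i..<A (Suc i)}"
    have "\<bar>f (\<tau> i) - f (\<rho> j)\<bar> \<le> \<eta>" using H[of i "\<rho> j"] inblock[of i j] i j m_def by simp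
    then show "\<bar>(f (\<tau> i) - f (\<rho> j)) * D j\<bar> \<le> \<eta> * \<bar>D j\<bar>"
      by (simp add: abs_mult mult_right_mono)
  qed
  also have "\<dots> = \<eta> * (\<Sum>j<n. \<bar>D j\<bar>)"
    using blocks[of "\<lambda>j. \<bar>D j\<bar>"] by (simp add: sum_distrib_left)
  also have "(\<Sum>j<n. \<bar>D j\<bar>) = vsum g R" unfolding vsum_def D_def n_def by simp
  finally show ?thesis .
qed

lemma common_refinement:
  assumes P: "is_partition P c d" and Q: "is_partition Q c d"
  obtains R where "is_partition R c d" "set P \<subseteq> set R" "set Q \<subseteq> set R"
proof -
  obtain R where s: "sorted_wrt (<) R" and sR: "set R = set P \<union> set Q"
    using finite_set_strict_sorted[of "set P \<union> set Q"] by auto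
  have cin: "c \<in> set R" using sR P unfolding is_partition_def by (auto intro: hd_in_set)
  have din: "d \<in> set R" using sR P unfolding is_partition_def by (auto intro: last_in_set)
  have bnd: "\<forall>z\<in>set R. c \<le> z \<and> z \<le> d"
    using sR part_basic(6)[OF P] part_basic(6)[OF Q] by (auto simp: in_set_conv_nth)
  have ne: "R \<noteq> []" using cin by auto
  have "hd R = c"
  proof -
    obtain r rs where Re: "R = r # rs" using ne by (cases R) auto
    have "c \<le> r" using bnd Re by simp
    moreover have "r \<le> c" using cin s Re by (auto simp: less_imp_le)
    ultimately show ?thesis using Re by simp
  qed
  moreover have "last R = d"
  proof -
    have "last R \<in> set R" using ne by simp
    then have "last R \<le> d" using bnd by simp
    moreover have "d \<le> last R"
    proof -
      obtain k where k: "k < length R" "R ! k = d" using din by (auto simp: in_set_conv_nth)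
      have "R ! k \<le> R ! (length R - 1)"
        using s k by (cases "k = length R - 1") (auto simp: sorted_wrt_iff_nth_less less_imp_le)
      then show ?thesis using k ne by (simp add: last_conv_nth)
    qed
    ultimately show ?thesis by simp
  qed
  ultimately have "is_partition R c d" using s ne unfolding is_partition_def by simp
  then show ?thesis using that sR by auto
qed

lemma rs_sum_close:
  fixes f g :: "real \<Rightarrow> real"
  assumes f: "continuous_on {c..d} f" and M: "\<forall>p. is_partition p c d \<longrightarrow> vsum g p \<le> M"
    and e: "\<epsilon> > 0"
  shows "\<exists>\<delta>>0. \<forall>P \<tau> Q \<rho>. is_partition P c d \<and> fine_partition \<delta> P \<and> partition_tags P \<tau> \<and>
      is_partition Q c d \<and> fine_partition \<delta> Q \<and> partition_tags Q \<rho> \<longrightarrow>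
      \<bar>rs_sum f g P \<tau> - rs_sum f g Q \<rho>\<bar> \<le> \<epsilon>"
proof -
  define \<eta> where "\<eta> = \<epsilon> / (2 * (\<bar>M\<bar> + 1))"
  have \<eta>: "\<eta> > 0" using e unfolding \<eta>_def by (simp add: add_pos_nonneg)
  have uc: "uniformly_continuous_on {c..d} f"
    by (rule compact_uniformly_continuous[OF f compact_Icc])
  obtain \<delta> where \<delta>: "\<delta> > 0" and dd: "\<And>x x'. x \<in> {c..d} \<Longrightarrow> x' \<in> {c..d} \<Longrightarrow> dist x' x < \<delta> \<Longrightarrow> dist (f x') (f x) < \<eta>"
    using uc \<eta> unfolding uniformly_continuous_on_def by metis
  have one: "\<bar>rs_sum f g P \<tau> - rs_sum f g R \<rho>\<bar> \<le> \<epsilon> / 2"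
    if P: "is_partition P c d" "fine_partition \<delta> P" "partition_tags P \<tau>"
      and R: "is_partition R c d" "partition_tags R \<rho>" "set P \<subseteq> set R" for P \<tau> R \<rho>
  proof -
    have "\<bar>rs_sum f g P \<tau> - rs_sum f g R \<rho>\<bar> \<le> \<eta> * vsum g R"
    proof (rule refine_bound[OF P(1) R(1) R(3) P(3) R(2)])
      fix i x assume i: "i < length P - 1" and x: "P ! i \<le> x" "x \<le> P ! Suc i"
      have t: "P ! i \<le> \<tau> i" "\<tau> i \<le> P ! Suc i" "c \<le> \<tau> i" "\<tau> i \<le> d"
        using tag_in[OF P(1) P(3) i] by auto
      have "c \<le> P ! i" "P ! Suc i \<le> d" using part_basic(6)[OF P(1)] i by auto
      moreover have "P ! Suc i - P ! i < \<delta>" using P(2) i unfolding fine_partition_def by simp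
      ultimately have "dist (f (\<tau> i)) (f x) < \<eta>"
        using dd[of x "\<tau> i"] t x by (simp add: dist_real_def)
      then show "\<bar>f (\<tau> i) - f x\<bar> \<le> \<eta>" by (simp add: dist_real_def)
    qed
    also have "\<dots> \<le> \<eta> * (\<bar>M\<bar> + 1)"
      using M R(1) \<eta> by (intro mult_left_mono) auto
    also have "\<dots> = \<epsilon> / 2" unfolding \<eta>_def by (simp add: field_simps)
    finally show ?thesis .
  qed
  show ?thesis
  proof (intro exI[of _ \<delta>] conjI \<delta> allI impI)
    fix P \<tau> Q \<rho>
    assume H: "is_partition P c d \<and> fine_partition \<delta> P \<and> partition_tags P \<tau> \<and>
      is_partition Q c d \<and> fine_partition \<delta> Q \<and> partition_tags Q \<rho>"
    obtain R where R: "is_partition R c d" "set P \<subseteq> set R" "set Q \<subseteq> set R"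
      using common_refinement H by metis
    have "\<bar>rs_sum f g P \<tau> - rs_sum f g R (\<lambda>i. R ! i)\<bar> \<le> \<epsilon> / 2"
      using one H R left_tags[OF R(1)] by blast
    moreover have "\<bar>rs_sum f g Q \<rho> - rs_sum f g R (\<lambda>i. R ! i)\<bar> \<le> \<epsilon> / 2"
      using one H R left_tags[OF R(1)] by blast
    ultimately show "\<bar>rs_sum f g P \<tau> - rs_sum f g Q \<rho>\<bar> \<le> \<epsilon>" by linarith
  qed
qed

lemma rs_exists:
  fixes f g :: "real \<Rightarrow> real"
  assumes f: "continuous_on {c..d} f" and M: "\<forall>p. is_partition p c d \<longrightarrow> vsum g p \<le> M"
    and cd: "c \<le> d"
  shows "\<exists>I. has_rs_integral f g c d I"
proof -
  define Q where "Q n = (SOME p. is_partition p c d \<and> fine_partition (1 / (real n + 1)) p)" for n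
  have Q: "is_partition (Q n) c d \<and> fine_partition (1 / (real n + 1)) (Q n)" for n
    unfolding Q_def by (rule someI_ex) (rule exists_fine[OF cd], simp)
  define S where "S n = rs_sum f g (Q n) (\<lambda>i. Q n ! i)" for n
  have fineN: "\<exists>N. \<forall>n\<ge>N. fine_partition \<delta> (Q n)" if dpos: "\<delta> > 0" for \<delta>
  proof -
    obtain N :: nat where N: "inverse (real (Suc N)) < \<delta>" using reals_Archimedean[OF dpos] by blast
    have "fine_partition \<delta> (Q n)" if "n \<ge> N" for n
    proof (rule fine_mono)
      show "fine_partition (1 / (real n + 1)) (Q n)" using Q by simp
      have "1 / (real n + 1) \<le> 1 / (real N + 1)" using that by (simp add: frac_le)
      moreover have "1 / (real N + 1) < \<delta>" using N by (simp add: inverse_eq_divide add.commute)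
      ultimately show "1 / (real n + 1) \<le> \<delta>" by linarith
    qed
    then show ?thesis by blast
  qed
  have "Cauchy S"
  proof (rule CauchyI)
    fix e :: real assume e: "e > 0"
    obtain \<delta> where \<delta>: "\<delta> > 0" and cl: "\<forall>P \<tau> Q \<rho>. is_partition P c d \<and> fine_partition \<delta> P \<and> partition_tags P \<tau> \<and>
      is_partition Q c d \<and> fine_partition \<delta> Q \<and> partition_tags Q \<rho> \<longrightarrow>
      \<bar>rs_sum f g P \<tau> - rs_sum f g Q \<rho>\<bar> \<le> e / 2"
      using rs_sum_close[OF f M, of "e/2"] e by auto
    obtain N where N: "\<forall>n\<ge>N. fine_partition \<delta> (Q n)" using fineN[OF \<delta>] by blast
    have "norm (S m - S n) < e" if "m \<ge> N" "n \<ge> N" for m n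
    proof -
      have "\<bar>S m - S n\<bar> \<le> e / 2" unfolding S_def using cl N that Q left_tags by blast
      then show ?thesis using e by simp
    qed
    then show "\<exists>M. \<forall>m\<ge>M. \<forall>n\<ge>M. norm (S m - S n) < e" by blast
  qed
  then obtain I where I: "S \<longlonglongrightarrow> I" using Cauchy_convergent_iff convergent_def by blast
  have "has_rs_integral f g c d I"
    unfolding has_rs_integral_def
  proof (intro allI impI)
    fix e :: real assume e: "e > 0"
    obtain \<delta> where \<delta>: "\<delta> > 0" and cl: "\<forall>P \<tau> Q \<rho>. is_partition P c d \<and> fine_partition \<delta> P \<and> partition_tags P \<tau> \<and>
      is_partition Q c d \<and> fine_partition \<delta> Q \<and> partition_tags Q \<rho> \<longrightarrow>
      \<bar>rs_sum f g P \<tau> - rs_sum f g Q \<rho>\<bar> \<le> e / 2"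
      using rs_sum_close[OF f M, of "e/2"] e by auto
    obtain N1 where N1: "\<forall>n\<ge>N1. fine_partition \<delta> (Q n)" using fineN[OF \<delta>] by blast
    obtain N2 where N2: "\<forall>n\<ge>N2. norm (S n - I) < e / 2" using LIMSEQ_D[OF I, of "e/2"] e by auto
    define n where "n = max N1 N2"
    have fn: "fine_partition \<delta> (Q n)" and Sn: "\<bar>S n - I\<bar> < e / 2" using N1 N2 unfolding n_def by auto
    show "\<exists>\<delta>>0. \<forall>p \<tau>. is_partition p c d \<and> fine_partition \<delta> p \<and> partition_tags p \<tau> \<longrightarrow>
        \<bar>rs_sum f g p \<tau> - I\<bar> < e"
    proof (intro exI[of _ \<delta>] conjI \<delta> allI impI)
      fix p \<tau> assume H: "is_partition p c d \<and> fine_partition \<delta> p \<and> partition_tags p \<tau>"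
      have "\<bar>rs_sum f g p \<tau> - S n\<bar> \<le> e / 2" unfolding S_def using cl H fn Q left_tags by blast
      then show "\<bar>rs_sum f g p \<tau> - I\<bar> < e" using Sn by linarith
    qed
  qed
  then show ?thesis by blast
qed

lemma rs_unique:
  assumes "has_rs_integral f g c d I" "has_rs_integral f g c d J" "c \<le> d"
  shows "I = J"
proof (rule ccontr)
  assume ne: "I \<noteq> J"
  define e where "e = \<bar>I - J\<bar> / 2"
  have e: "e > 0" using ne unfolding e_def by simp
  obtain d1 where d1: "d1 > 0" "\<forall>p \<tau>. is_partition p c d \<and> fine_partition d1 p \<and> partition_tags p \<tau> \<longrightarrow> \<bar>rs_sum f g p \<tau> - I\<bar> < e"
    using assms(1) e unfolding has_rs_integral_def by blast
  obtain d2 where d2: "d2 > 0" "\<forall>p \<tau>. is_partition p c d \<and> fine_partition d2 p \<and> partition_tags p \<tau> \<longrightarrow> \<bar>rs_sum f g p \<tau> - J\<bar> < e"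
    using assms(2) e unfolding has_rs_integral_def by blast
  obtain p where p: "is_partition p c d" "fine_partition (min d1 d2) p"
    using exists_fine[OF assms(3), of "min d1 d2"] d1 d2 by auto
  have "\<bar>rs_sum f g p (\<lambda>i. p ! i) - I\<bar> < e" using d1 p left_tags[OF p(1)] fine_mono[OF p(2)] by auto
  moreover have "\<bar>rs_sum f g p (\<lambda>i. p ! i) - J\<bar> < e" using d2 p left_tags[OF p(1)] fine_mono[OF p(2)] by auto
  ultimately have "\<bar>I - J\<bar> < 2 * e" unfolding abs_less_iff by linarith
  then show False unfolding e_def by simp
qed

lemma rs_integral_eq:
  assumes "has_rs_integral f g c d I" "c \<le> d"
  shows "rs_integral f g c d = I"
  unfolding rs_integral_def using assms rs_unique by blast

definition vf :: "(real \<Rightarrow> 'v::real_normed_vector) \<Rightarrow> real \<Rightarrow> real \<Rightarrow> real" where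
  "vf g a t = (SUP p\<in>{p. is_partition p a t}. vsum g p)"

lemma part_exists: "a \<le> t \<Longrightarrow> \<exists>p. is_partition p a t"
  using exists_fine[of a t 1] by auto

context
  fixes g :: "real \<Rightarrow> 'v::real_normed_vector" and a b M :: real
  assumes M: "\<forall>p. is_partition p a b \<longrightarrow> vsum g p \<le> M"
begin

lemma vf_bdd: "t \<le> b \<Longrightarrow> bdd_above ((\<lambda>p. vsum g p) ` {p. is_partition p a t})"
  using vsum_restrict[OF M] by (auto intro!: bdd_aboveI2[of _ _ M])

lemma vf_upper: "is_partition p a t \<Longrightarrow> t \<le> b \<Longrightarrow> vsum g p \<le> vf g a t"
  unfolding vf_def by (rule cSUP_upper) (auto intro: vf_bdd)

lemma vf_nonneg: "a \<le> t \<Longrightarrow> t \<le> b \<Longrightarrow> 0 \<le> vf g a t"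
proof -
  assume "a \<le> t" "t \<le> b"
  then obtain p where "is_partition p a t" using part_exists by blast
  then show ?thesis using vf_upper[of p t] vsum_nonneg[of g p] \<open>t \<le> b\<close> by linarith
qed

lemma vf_le: "a \<le> t \<Longrightarrow> t \<le> b \<Longrightarrow> vf g a t \<le> M"
  unfolding vf_def using part_exists vsum_restrict[OF M] by (intro cSUP_least) auto

lemma vf_incr:
  assumes "a \<le> x" "x \<le> y" "y \<le> b"
  shows "vf g a x + norm (g y - g x) \<le> vf g a y"
proof (cases "x = y")
  case True then show ?thesis by simp
next
  case False
  then have xy: "x < y" using assms by simp
  have "vf g a x \<le> vf g a y - norm (g y - g x)"
    unfolding vf_def[of g a x]
  proof (rule cSUP_least)
    show "{p. is_partition p a x} \<noteq> {}" using part_exists assms by auto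
    fix p assume "p \<in> {p. is_partition p a x}"
    then have p: "is_partition p a x" by simp
    have pp: "is_partition (p @ [y]) a y" by (rule append_point_partition[OF p xy])
    have ne: "p \<noteq> []" and lp: "last p = x" using p unfolding is_partition_def by auto
    have "vsum g (p @ [y]) = vsum g p + norm (g y - g x)"
      unfolding vsum_def using append_point_sum[OF ne, of "\<lambda>i u v. norm (g v - g u)" y] lp by simp
    moreover have "vsum g (p @ [y]) \<le> vf g a y" using vf_upper[OF pp] assms by simp
    ultimately show "vsum g p \<le> vf g a y - norm (g y - g x)" by simp
  qed
  then show ?thesis by simp
qed

end

lemma pow_ineq:
  fixes x y :: real
  assumes "0 \<le> x" "x \<le> y"
  shows "real (Suc k) * x ^ k * (y - x) \<le> y ^ Suc k - x ^ Suc k"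
proof (induction k)
  case 0 then show ?case by simp
next
  case (Suc k)
  have yx: "y - x \<ge> 0" using assms by simp
  have "real (Suc (Suc k)) * x ^ Suc k * (y - x) = x * (real (Suc k) * x ^ k * (y - x)) + x ^ Suc k * (y - x)"
    by (simp add: algebra_simps)
  also have "\<dots> \<le> y * (real (Suc k) * x ^ k * (y - x)) + x ^ Suc k * (y - x)"
    using assms yx by (intro add_right_mono mult_right_mono) (auto intro!: mult_nonneg_nonneg)
  also have "\<dots> \<le> y * (y ^ Suc k - x ^ Suc k) + x ^ Suc k * (y - x)"
    using Suc assms by (intro add_right_mono mult_left_mono) auto
  also have "\<dots> = y ^ Suc (Suc k) - x ^ Suc (Suc k)" by (simp add: algebra_simps)
  finally show ?case .
qed

lemma sum_bound:
  fixes f g V :: "real \<Rightarrow> real"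
  assumes p: "is_partition p a t"
    and hf: "\<forall>i<length p. \<bar>f (p ! i)\<bar> \<le> V (p ! i) ^ k / fact k"
    and hg: "\<forall>i<length p - 1. \<bar>g (p ! Suc i) - g (p ! i)\<bar> \<le> V (p ! Suc i) - V (p ! i)"
    and hV: "\<forall>i<length p. 0 \<le> V (p ! i)"
  shows "\<bar>rs_sum f g p (\<lambda>i. p ! i)\<bar> \<le> V t ^ Suc k / fact (Suc k)"
proof -
  define n where "n = length p - 1"
  have lp: "length p = Suc n" using part_basic(1)[OF p] n_def by simp
  define h where "h j = V (p ! j) ^ Suc k / fact (Suc k)" for j
  have "\<bar>rs_sum f g p (\<lambda>i. p ! i)\<bar> \<le> (\<Sum>i<n. \<bar>f (p ! i) * (g (p ! Suc i) - g (p ! i))\<bar>)"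
    unfolding rs_sum_def n_def[symmetric] by (rule sum_abs)
  also have "\<dots> \<le> (\<Sum>i<n. h (Suc i) - h i)"
  proof (rule sum_mono)
    fix i assume "i \<in> {..<n}"
    then have i: "i < n" by simp
    have V0: "0 \<le> V (p ! i)" using hV i lp by simp
    have dg: "\<bar>g (p ! Suc i) - g (p ! i)\<bar> \<le> V (p ! Suc i) - V (p ! i)" using hg i n_def by simp
    then have Vle: "V (p ! i) \<le> V (p ! Suc i)" by linarith
    have "\<bar>f (p ! i) * (g (p ! Suc i) - g (p ! i))\<bar> = \<bar>f (p ! i)\<bar> * \<bar>g (p ! Suc i) - g (p ! i)\<bar>"
      by (simp add: abs_mult)
    also have "\<dots> \<le> V (p ! i) ^ k / fact k * (V (p ! Suc i) - V (p ! i))"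
      using hf i lp dg V0 by (intro mult_mono) auto
    also have "\<dots> = real (Suc k) * V (p ! i) ^ k * (V (p ! Suc i) - V (p ! i)) / fact (Suc k)"
    proof -
      have "real (Suc k) * V (p ! i) ^ k * (V (p ! Suc i) - V (p ! i)) / fact (Suc k)
          = (real (Suc k) * (V (p ! i) ^ k * (V (p ! Suc i) - V (p ! i)))) / (real (Suc k) * fact k)"
        by (simp only: fact_Suc of_nat_mult mult.assoc)
      also have "\<dots> = V (p ! i) ^ k * (V (p ! Suc i) - V (p ! i)) / fact k"
        by (rule mult_divide_mult_cancel_left) simp
      finally show ?thesis by simp
    qed
    also have "\<dots> \<le> (V (p ! Suc i) ^ Suc k - V (p ! i) ^ Suc k) / fact (Suc k)"
      by (intro divide_right_mono pow_ineq V0 Vle) simp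
    also have "\<dots> = h (Suc i) - h i" unfolding h_def by (simp add: diff_divide_distrib)
    finally show "\<bar>f (p ! i) * (g (p ! Suc i) - g (p ! i))\<bar> \<le> h (Suc i) - h i" .
  qed
  also have "\<dots> = h n - h 0" by (rule sum_lessThan_telescope)
  also have "\<dots> \<le> h n" unfolding h_def using hV lp by simp
  also have "h n = V t ^ Suc k / fact (Suc k)" unfolding h_def using part_basic(3)[OF p] n_def by simp
  finally show ?thesis .
qed

lemma integral_bound:
  fixes f g V :: "real \<Rightarrow> real"
  assumes I: "has_rs_integral f g a t I" and at: "a \<le> t"
    and hf: "\<forall>u\<in>{a..t}. \<bar>f u\<bar> \<le> V u ^ k / fact k"
    and hg: "\<And>x y. a \<le> x \<Longrightarrow> x \<le> y \<Longrightarrow> y \<le> t \<Longrightarrow> \<bar>g y - g x\<bar> \<le> V y - V x"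
    and hV: "\<forall>u\<in>{a..t}. 0 \<le> V u"
  shows "\<bar>I\<bar> \<le> V t ^ Suc k / fact (Suc k)"
proof (rule field_le_epsilon)
  fix e :: real assume e: "e > 0"
  obtain \<delta> where \<delta>: "\<delta> > 0" "\<forall>p \<tau>. is_partition p a t \<and> fine_partition \<delta> p \<and> partition_tags p \<tau> \<longrightarrow> \<bar>rs_sum f g p \<tau> - I\<bar> < e"
    using I e unfolding has_rs_integral_def by blast
  obtain p where p: "is_partition p a t" "fine_partition \<delta> p" using exists_fine[OF at \<delta>(1)] by blast
  have close: "\<bar>rs_sum f g p (\<lambda>i. p ! i) - I\<bar> < e" using \<delta>(2) p left_tags[OF p(1)] by blast
  have inab: "\<And>i. i < length p \<Longrightarrow> p ! i \<in> {a..t}" using part_basic(6)[OF p(1)] by auto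
  have "\<bar>rs_sum f g p (\<lambda>i. p ! i)\<bar> \<le> V t ^ Suc k / fact (Suc k)"
  proof (rule sum_bound[OF p(1)])
    show "\<forall>i<length p. \<bar>f (p ! i)\<bar> \<le> V (p ! i) ^ k / fact k" using hf inab by blast
    show "\<forall>i<length p. 0 \<le> V (p ! i)" using hV inab by blast
    show "\<forall>i<length p - 1. \<bar>g (p ! Suc i) - g (p ! i)\<bar> \<le> V (p ! Suc i) - V (p ! i)"
    proof (intro allI impI hg)
      fix i assume i: "i < length p - 1"
      show "a \<le> p ! i" using inab[of i] i by simp
      show "p ! i \<le> p ! Suc i" using part_basic(5)[OF p(1), of i "Suc i"] i by simp
      show "p ! Suc i \<le> t" using inab[of "Suc i"] i by simp
    qed
  qed
  then show "\<bar>I\<bar> \<le> V t ^ Suc k / fact (Suc k) + e" using close by linarith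
qed

lemma indef_cont:
  fixes f g I :: "real \<Rightarrow> real"
  assumes f: "continuous_on {a..b} f" and g: "continuous_on {a..b} g"
    and M: "\<forall>t\<in>{a..b}. \<forall>p. is_partition p a t \<longrightarrow> vsum g p \<le> M"
    and I: "\<forall>t\<in>{a..b}. has_rs_integral f g a t (I t)"
  shows "continuous_on {a..b} I"
proof -
  obtain B0 where B0: "\<forall>u\<in>{a..b}. norm (f u) \<le> B0"
    using compact_imp_bounded[OF compact_continuous_image[OF f compact_Icc]] unfolding bounded_iff by auto
  define B where "B = max B0 0"
  have B: "\<forall>u\<in>{a..b}. \<bar>f u\<bar> \<le> B" "B \<ge> 0" using B0 unfolding B_def by force+
  have uc: "uniformly_continuous_on {a..b} f"
    by (rule compact_uniformly_continuous[OF f compact_Icc])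
  have est: "\<exists>\<rho>>0. \<forall>x y. a \<le> x \<longrightarrow> x < y \<longrightarrow> y \<le> b \<longrightarrow> y - x < \<rho> \<longrightarrow>
      \<bar>I y - I x\<bar> \<le> B * \<bar>g y - g x\<bar> + \<eta> * M" if \<eta>: "\<eta> > 0" for \<eta>
  proof -
    obtain \<rho> where \<rho>: "\<rho> > 0" and dd: "\<And>x x'. x \<in> {a..b} \<Longrightarrow> x' \<in> {a..b} \<Longrightarrow> dist x' x < \<rho> \<Longrightarrow> dist (f x') (f x) < \<eta>"
      using uc \<eta> unfolding uniformly_continuous_on_def by metis
    show ?thesis
    proof (intro exI[of _ \<rho>] conjI \<rho> allI impI)
      fix x y assume ax: "a \<le> x" and xy: "x < y" and yb: "y \<le> b" and yx: "y - x < \<rho>"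
      show "\<bar>I y - I x\<bar> \<le> B * \<bar>g y - g x\<bar> + \<eta> * M"
      proof (rule field_le_epsilon)
        fix e :: real assume e: "e > 0"
        have xin: "x \<in> {a..b}" and yin: "y \<in> {a..b}" using ax xy yb by auto
        obtain d1 where d1: "d1 > 0" "\<forall>p \<tau>. is_partition p a x \<and> fine_partition d1 p \<and> partition_tags p \<tau> \<longrightarrow> \<bar>rs_sum f g p \<tau> - I x\<bar> < e / 2"
          using I xin e unfolding has_rs_integral_def by (meson half_gt_zero)
        obtain d2 where d2: "d2 > 0" "\<forall>p \<tau>. is_partition p a y \<and> fine_partition d2 p \<and> partition_tags p \<tau> \<longrightarrow> \<bar>rs_sum f g p \<tau> - I y\<bar> < e / 2"
          using I yin e unfolding has_rs_integral_def by (meson half_gt_zero)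
        define \<delta> where "\<delta> = min d1 d2"
        have \<delta>: "\<delta> > 0" "\<delta> \<le> d1" "\<delta> \<le> d2" using d1 d2 unfolding \<delta>_def by auto
        obtain P where P: "is_partition P a x" "fine_partition \<delta> P" using exists_fine[OF ax \<delta>(1)] by blast
        obtain Q where Q: "is_partition Q x y" "fine_partition \<delta> Q" using exists_fine[of x y \<delta>] xy \<delta>(1) by auto
        define R where "R = P @ tl Q"
        have R: "is_partition R a y" "fine_partition \<delta> R"
          unfolding R_def using concat_partition(1)[OF P(1) Q(1)] concat_fine[OF P(1) Q(1) P(2) Q(2)] by auto
        have SR: "rs_sum f g R (\<lambda>i. R ! i) = rs_sum f g P (\<lambda>i. P ! i) + rs_sum f g Q (\<lambda>i. Q ! i)"
          unfolding rs_sum_def R_def using concat_sum[OF P(1) Q(1), of "\<lambda>u v. f u * (g v - g u)"] by simp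
        have VR: "vsum g R = vsum g P + vsum g Q"
          unfolding vsum_def R_def using concat_sum[OF P(1) Q(1), of "\<lambda>u v. norm (g v - g u)"] by simp
        have VQ: "vsum g Q \<le> M" using VR M R(1) yin vsum_nonneg[of g P] by fastforce
        have cP: "\<bar>rs_sum f g P (\<lambda>i. P ! i) - I x\<bar> < e / 2" using d1 P left_tags[OF P(1)] fine_mono[OF P(2) \<delta>(2)] by blast
        have cR: "\<bar>rs_sum f g R (\<lambda>i. R ! i) - I y\<bar> < e / 2" using d2 R left_tags[OF R(1)] fine_mono[OF R(2) \<delta>(3)] by blast
        define n where "n = length Q - 1"
        have lQ: "length Q = Suc n" using part_basic(1)[OF Q(1)] n_def by simp
        have tel: "(\<Sum>j<n. g (Q ! Suc j) - g (Q ! j)) = g y - g x"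
          using sum_lessThan_telescope[of "\<lambda>j. g (Q ! j)" n] part_basic(2)[OF Q(1)] part_basic(3)[OF Q(1)] n_def
          by simp
        have SQ: "rs_sum f g Q (\<lambda>i. Q ! i) = f x * (g y - g x) + (\<Sum>j<n. (f (Q ! j) - f x) * (g (Q ! Suc j) - g (Q ! j)))"
          unfolding rs_sum_def n_def[symmetric] tel[symmetric]
          by (simp add: sum_distrib_left sum.distrib[symmetric] algebra_simps)
        have "\<bar>\<Sum>j<n. (f (Q ! j) - f x) * (g (Q ! Suc j) - g (Q ! j))\<bar> \<le> (\<Sum>j<n. \<bar>(f (Q ! j) - f x) * (g (Q ! Suc j) - g (Q ! j))\<bar>)"
          by (rule sum_abs)
        also have "\<dots> \<le> (\<Sum>j<n. \<eta> * norm (g (Q ! Suc j) - g (Q ! j)))"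
        proof (rule sum_mono)
          fix j assume "j \<in> {..<n}"
          then have j: "j < length Q" using lQ by simp
          have qj: "x \<le> Q ! j" "Q ! j \<le> y" using part_basic(6)[OF Q(1) j] by auto
          have "dist (f (Q ! j)) (f x) < \<eta>" using dd[of x "Q ! j"] qj xin yin yx by (simp add: dist_real_def)
          then have "\<bar>f (Q ! j) - f x\<bar> \<le> \<eta>" by (simp add: dist_real_def)
          then show "\<bar>(f (Q ! j) - f x) * (g (Q ! Suc j) - g (Q ! j))\<bar> \<le> \<eta> * norm (g (Q ! Suc j) - g (Q ! j))"
            by (simp add: abs_mult mult_right_mono)
        qed
        also have "\<dots> = \<eta> * vsum g Q" unfolding vsum_def n_def by (simp add: sum_distrib_left)
        also have "\<dots> \<le> \<eta> * M" using VQ \<eta> by (simp add: mult_left_mono)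
        finally have rest: "\<bar>\<Sum>j<n. (f (Q ! j) - f x) * (g (Q ! Suc j) - g (Q ! j))\<bar> \<le> \<eta> * M" .
        have fx: "\<bar>f x * (g y - g x)\<bar> \<le> B * \<bar>g y - g x\<bar>"
          using B xin by (simp add: abs_mult mult_right_mono)
        have "\<bar>rs_sum f g Q (\<lambda>i. Q ! i)\<bar> \<le> B * \<bar>g y - g x\<bar> + \<eta> * M"
          unfolding SQ using rest fx by linarith
        then show "\<bar>I y - I x\<bar> \<le> B * \<bar>g y - g x\<bar> + \<eta> * M + e"
          using cP cR SR unfolding abs_le_iff abs_less_iff by linarith
      qed
    qed
  qed
  show ?thesis
    unfolding continuous_on_iff
  proof (intro ballI allI impI)
    fix x0 e :: real assume x0: "x0 \<in> {a..b}" and e: "e > 0"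
    define \<eta> where "\<eta> = e / (2 * (\<bar>M\<bar> + 1))"
    have \<eta>: "\<eta> > 0" using e unfolding \<eta>_def by (simp add: add_pos_nonneg)
    have \<eta>M: "\<eta> * M < e / 2"
    proof -
      have "\<eta> * M \<le> \<eta> * \<bar>M\<bar>" using \<eta> by (simp add: mult_left_mono)
      also have "\<dots> < \<eta> * (\<bar>M\<bar> + 1)" using \<eta> by simp
      also have "\<dots> = e / 2" unfolding \<eta>_def by (simp add: field_simps)
      finally show ?thesis .
    qed
    obtain \<rho> where \<rho>: "\<rho> > 0" and est\<rho>: "\<forall>x y. a \<le> x \<longrightarrow> x < y \<longrightarrow> y \<le> b \<longrightarrow> y - x < \<rho> \<longrightarrow>
      \<bar>I y - I x\<bar> \<le> B * \<bar>g y - g x\<bar> + \<eta> * M" using est[OF \<eta>] by blast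
    define e' where "e' = e / (2 * (B + 1))"
    have e': "e' > 0" using e B unfolding e'_def by (simp add: add_pos_nonneg)
    have Be': "B * e' < e / 2"
    proof -
      have "B * e' < (B + 1) * e'" using e' by simp
      also have "\<dots> = e / 2" unfolding e'_def using B by (simp add: field_simps)
      finally show ?thesis .
    qed
    obtain d' where d': "d' > 0" "\<forall>x'\<in>{a..b}. dist x' x0 < d' \<longrightarrow> dist (g x') (g x0) < e'"
      using g x0 e' unfolding continuous_on_iff by blast
    show "\<exists>d>0. \<forall>x'\<in>{a..b}. dist x' x0 < d \<longrightarrow> dist (I x') (I x0) < e"
    proof (intro exI[of _ "min \<rho> d'"] conjI ballI impI)
      show "min \<rho> d' > 0" using \<rho> d' by simp
      fix x' assume x': "x' \<in> {a..b}" and dx: "dist x' x0 < min \<rho> d'"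
      have gd: "\<bar>g x' - g x0\<bar> < e'" using d' x' dx by (simp add: dist_real_def)
      then have gB: "B * \<bar>g x' - g x0\<bar> \<le> B * e'" using B by (simp add: mult_left_mono)
      consider "x' = x0" | "x0 < x'" | "x' < x0" by linarith
      then show "dist (I x') (I x0) < e"
      proof cases
        case 1 then show ?thesis using e by simp
      next
        case 2
        have "\<bar>I x' - I x0\<bar> \<le> B * \<bar>g x' - g x0\<bar> + \<eta> * M"
          using est\<rho> x0 x' 2 dx by (auto simp: dist_real_def)
        then show ?thesis using gB Be' \<eta>M by (simp add: dist_real_def)
      next
        case 3
        have "\<bar>I x0 - I x'\<bar> \<le> B * \<bar>g x0 - g x'\<bar> + \<eta> * M"
          using est\<rho> x0 x' 3 dx by (auto simp: dist_real_def)
        then show ?thesis using gB Be' \<eta>M by (simp add: dist_real_def abs_minus_commute)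
      qed
    qed
  qed
qed


context
  fixes \<gamma> :: "real \<Rightarrow> 'v::euclidean_space" and a b M :: real
  assumes cont: "continuous_on {a..b} \<gamma>" and M: "\<forall>p. is_partition p a b \<longrightarrow> vsum \<gamma> p \<le> M"
begin

lemma Mcoord: "e \<in> Basis \<Longrightarrow> t \<in> {a..b} \<Longrightarrow> \<forall>p. is_partition p a t \<longrightarrow> vsum (\<lambda>u. \<gamma> u \<bullet> e) p \<le> M"
proof (intro allI impI)
  fix p assume e: "e \<in> Basis" and t: "t \<in> {a..b}" and p: "is_partition p a t"
  have "vsum (\<lambda>u. \<gamma> u \<bullet> e) p \<le> vsum \<gamma> p" by (rule vsum_inner_le[OF e])
  also have "\<dots> \<le> M" using vsum_restrict[OF M p] t by simp
  finally show "vsum (\<lambda>u. \<gamma> u \<bullet> e) p \<le> M" .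
qed

lemma rs_int_step:
  assumes f: "continuous_on {a..b} f" and e: "e \<in> Basis" and t: "t \<in> {a..b}"
  shows "has_rs_integral f (\<lambda>u. \<gamma> u \<bullet> e) a t (rs_integral f (\<lambda>u. \<gamma> u \<bullet> e) a t)"
proof -
  have f': "continuous_on {a..t} f" using continuous_on_subset[OF f] t by auto
  obtain I where I: "has_rs_integral f (\<lambda>u. \<gamma> u \<bullet> e) a t I"
    using rs_exists[OF f' Mcoord[OF e t]] t by auto
  then show ?thesis using rs_integral_eq[OF I] t by simp
qed

lemma sig_rev_props:
  "set w \<subseteq> Basis \<Longrightarrow> continuous_on {a..b} (sig_rev \<gamma> a w) \<and>
     (\<forall>t\<in>{a..b}. \<bar>sig_rev \<gamma> a w t\<bar> \<le> vf \<gamma> a t ^ length w / fact (length w))"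
proof (induction w)
  case Nil
  then show ?case by (simp add: continuous_on_const)
next
  case (Cons e w)
  have e: "e \<in> Basis" and sw: "set w \<subseteq> Basis" using Cons.prems by auto
  have fc: "continuous_on {a..b} (sig_rev \<gamma> a w)"
    and fb: "\<forall>t\<in>{a..b}. \<bar>sig_rev \<gamma> a w t\<bar> \<le> vf \<gamma> a t ^ length w / fact (length w)"
    using Cons.IH[OF sw] by auto
  define g where "g u = \<gamma> u \<bullet> e" for u
  have eq: "sig_rev \<gamma> a (e # w) = (\<lambda>t. rs_integral (sig_rev \<gamma> a w) g a t)"
    unfolding g_def by (simp add: fun_eq_iff)
  have hI: "\<forall>t\<in>{a..b}. has_rs_integral (sig_rev \<gamma> a w) g a t (rs_integral (sig_rev \<gamma> a w) g a t)"
    using rs_int_step[OF fc e] unfolding g_def by blast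
  have gc: "continuous_on {a..b} g" unfolding g_def
    by (intro continuous_on_inner cont continuous_on_const)
  have Mg: "\<forall>t\<in>{a..b}. \<forall>p. is_partition p a t \<longrightarrow> vsum g p \<le> M"
    using Mcoord[OF e] unfolding g_def by blast
  have c: "continuous_on {a..b} (sig_rev \<gamma> a (e # w))"
    unfolding eq by (rule indef_cont[OF fc gc Mg hI])
  have "\<bar>sig_rev \<gamma> a (e # w) t\<bar> \<le> vf \<gamma> a t ^ length (e # w) / fact (length (e # w))"
    if t: "t \<in> {a..b}" for t
  proof -
    have at: "a \<le> t" using t by simp
    have "\<bar>rs_integral (sig_rev \<gamma> a w) g a t\<bar> \<le> vf \<gamma> a t ^ Suc (length w) / fact (Suc (length w))"
    proof (rule integral_bound[OF hI[rule_format, OF t] at])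
      show "\<forall>u\<in>{a..t}. \<bar>sig_rev \<gamma> a w u\<bar> \<le> vf \<gamma> a u ^ length w / fact (length w)"
        using fb t by auto
      show "\<forall>u\<in>{a..t}. 0 \<le> vf \<gamma> a u" using vf_nonneg[OF M] t by auto
      fix x y assume xy: "a \<le> x" "x \<le> y" "y \<le> t"
      have "\<bar>g y - g x\<bar> = \<bar>(\<gamma> y - \<gamma> x) \<bullet> e\<bar>" unfolding g_def by (simp add: inner_diff_left)
      also have "\<dots> \<le> norm (\<gamma> y - \<gamma> x)" by (rule Basis_le_norm[OF e])
      also have "\<dots> \<le> vf \<gamma> a y - vf \<gamma> a x" using vf_incr[OF M xy(1) xy(2)] xy t by simp
      finally show "\<bar>g y - g x\<bar> \<le> vf \<gamma> a y - vf \<gamma> a x" .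
    qed
    then show ?thesis unfolding eq by simp
  qed
  then show ?case using c by blast
qed

end

definition mesh_filter :: "real \<Rightarrow> real \<Rightarrow> (real list \<times> (nat \<Rightarrow> real)) filter" where
  "mesh_filter c d = (INF \<delta>\<in>{0<..}. principal {(p, \<tau>). is_partition p c d \<and> fine_partition \<delta> p \<and> partition_tags p \<tau>})"

lemma eventually_mesh:
  "eventually P (mesh_filter c d) \<longleftrightarrow>
    (\<exists>\<delta>>0. \<forall>p \<tau>. is_partition p c d \<and> fine_partition \<delta> p \<and> partition_tags p \<tau> \<longrightarrow> P (p, \<tau>))"
  unfolding mesh_filter_def
proof (subst eventually_INF_base)
  show "{0<..} \<noteq> ({} :: real set)" by auto
  fix x y :: real assume "x \<in> {0<..}" "y \<in> {0<..}"
  then show "\<exists>z\<in>{0<..}. principal {(p, \<tau>). is_partition p c d \<and> fine_partition z p \<and> partition_tags p \<tau>}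
      \<le> inf (principal {(p, \<tau>). is_partition p c d \<and> fine_partition x p \<and> partition_tags p \<tau>})
            (principal {(p, \<tau>). is_partition p c d \<and> fine_partition y p \<and> partition_tags p \<tau>})"
    by (intro bexI[of _ "min x y"]) (auto intro: fine_mono)
next
  show "(\<exists>b\<in>{0<..}. eventually P (principal {(p, \<tau>). is_partition p c d \<and> fine_partition b p \<and> partition_tags p \<tau>})) =
    (\<exists>\<delta>>0. \<forall>p \<tau>. is_partition p c d \<and> fine_partition \<delta> p \<and> partition_tags p \<tau> \<longrightarrow> P (p, \<tau>))"
    by (auto simp: eventually_principal)
qed

lemma ev_part: "eventually (\<lambda>x. is_partition (fst x) c d \<and> partition_tags (fst x) (snd x)) (mesh_filter c d)"
  unfolding eventually_mesh by (intro exI[of _ 1]) auto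

lemma has_rs_tendsto:
  assumes "has_rs_integral f g c d I"
  shows "((\<lambda>x. rs_sum f g (fst x) (snd x)) \<longlongrightarrow> I) (mesh_filter c d)"
  unfolding tendsto_iff
proof (intro allI impI)
  fix e :: real assume "e > 0"
  then obtain \<delta> where "\<delta> > 0" "\<forall>p \<tau>. is_partition p c d \<and> fine_partition \<delta> p \<and> partition_tags p \<tau> \<longrightarrow> \<bar>rs_sum f g p \<tau> - I\<bar> < e"
    using assms unfolding has_rs_integral_def by blast
  then show "eventually (\<lambda>x. dist (rs_sum f g (fst x) (snd x)) I < e) (mesh_filter c d)"
    unfolding eventually_mesh dist_real_def by auto
qed

abbreviation rs2F where
  "rs2F K \<gamma> \<sigma> x \<equiv> rs2_sum K \<gamma> \<sigma> (fst (fst x)) (snd (fst x)) (fst (snd x)) (snd (snd x))"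

lemma tendsto_rs2:
  assumes "((\<lambda>x. rs2F K \<gamma> \<sigma> x) \<longlongrightarrow> I) (mesh_filter c d \<times>\<^sub>F mesh_filter e f)"
  shows "has_rs2_integral K \<gamma> \<sigma> c d e f I"
  unfolding has_rs2_integral_def
proof (intro allI impI)
  fix \<epsilon> :: real assume "\<epsilon> > 0"
  then have "eventually (\<lambda>x. dist (rs2F K \<gamma> \<sigma> x) I < \<epsilon>) (mesh_filter c d \<times>\<^sub>F mesh_filter e f)"
    using assms unfolding tendsto_iff by blast
  then obtain Pf Pg where Pf: "eventually Pf (mesh_filter c d)" and Pg: "eventually Pg (mesh_filter e f)"
    and PP: "\<forall>x y. Pf x \<longrightarrow> Pg y \<longrightarrow> dist (rs2F K \<gamma> \<sigma> (x, y)) I < \<epsilon>"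
    unfolding eventually_prod_filter by auto
  obtain d1 where d1: "d1 > 0" "\<forall>p \<tau>. is_partition p c d \<and> fine_partition d1 p \<and> partition_tags p \<tau> \<longrightarrow> Pf (p, \<tau>)"
    using Pf unfolding eventually_mesh by blast
  obtain d2 where d2: "d2 > 0" "\<forall>p \<tau>. is_partition p e f \<and> fine_partition d2 p \<and> partition_tags p \<tau> \<longrightarrow> Pg (p, \<tau>)"
    using Pg unfolding eventually_mesh by blast
  show "\<exists>\<delta>>0. \<forall>p \<tau> q \<rho>. is_partition p c d \<and> fine_partition \<delta> p \<and> partition_tags p \<tau> \<and>
        is_partition q e f \<and> fine_partition \<delta> q \<and> partition_tags q \<rho> \<longrightarrow>
        \<bar>rs2_sum K \<gamma> \<sigma> p \<tau> q \<rho> - I\<bar> < \<epsilon>"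
  proof (intro exI[of _ "min d1 d2"] conjI allI impI)
    show "min d1 d2 > 0" using d1 d2 by simp
    fix p \<tau> q \<rho> assume H: "is_partition p c d \<and> fine_partition (min d1 d2) p \<and> partition_tags p \<tau> \<and>
        is_partition q e f \<and> fine_partition (min d1 d2) q \<and> partition_tags q \<rho>"
    have "Pf (p, \<tau>)" using d1 H fine_mono[of "min d1 d2" p d1] by auto
    moreover have "Pg (q, \<rho>)" using d2 H fine_mono[of "min d1 d2" q d2] by auto
    ultimately show "\<bar>rs2_sum K \<gamma> \<sigma> p \<tau> q \<rho> - I\<bar> < \<epsilon>" using PP by (force simp: dist_real_def)
  qed
qed

lemma unif_limit:
  fixes S :: "'x \<Rightarrow> real" and Sn :: "nat \<Rightarrow> 'x \<Rightarrow> real"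
  assumes T: "\<And>n. (Sn n \<longlongrightarrow> In n) F" and I: "In \<longlonglongrightarrow> I" and E: "en \<longlonglongrightarrow> 0"
    and B: "\<And>n. eventually (\<lambda>x. \<bar>S x - Sn n x\<bar> \<le> en n) F"
  shows "(S \<longlongrightarrow> I) F"
  unfolding tendsto_iff
proof (intro allI impI)
  fix e :: real assume e: "e > 0"
  have e3: "e / 3 > 0" using e by simp
  have "eventually (\<lambda>n. dist (en n) 0 < e / 3) sequentially"
    using E e3 by (rule tendstoD)
  moreover have "eventually (\<lambda>n. dist (In n) I < e / 3) sequentially"
    using I e3 by (rule tendstoD)
  ultimately have "eventually (\<lambda>n. dist (en n) 0 < e / 3 \<and> dist (In n) I < e / 3) sequentially"
    by (rule eventually_conj)
  then obtain n where n0: "dist (en n) 0 < e / 3" "dist (In n) I < e / 3"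
    unfolding eventually_sequentially by auto
  have n: "\<bar>en n\<bar> < e / 3" "\<bar>In n - I\<bar> < e / 3" using n0 unfolding dist_real_def by auto
  have "eventually (\<lambda>x. dist (Sn n x) (In n) < e / 3) F"
    using T[of n] e3 by (rule tendstoD)
  then have "eventually (\<lambda>x. \<bar>Sn n x - In n\<bar> < e / 3) F"
    unfolding dist_real_def .
  then show "eventually (\<lambda>x. dist (S x) I < e) F"
  proof (rule eventually_elim2[OF _ B[of n]])
    fix x assume "\<bar>Sn n x - In n\<bar> < e / 3" "\<bar>S x - Sn n x\<bar> \<le> en n"
    then show "dist (S x) I < e" using n unfolding dist_real_def abs_less_iff abs_le_iff by linarith
  qed
qed

lemma swap4:
  "(\<Sum>i\<in>I. \<Sum>j\<in>J. \<Sum>w\<in>W. \<Sum>e\<in>E. F i j w e) = (\<Sum>w\<in>W. \<Sum>e\<in>E. \<Sum>i\<in>I. \<Sum>j\<in>J. F i j w e)"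
proof -
  have "(\<Sum>i\<in>I. \<Sum>j\<in>J. \<Sum>w\<in>W. \<Sum>e\<in>E. F i j w e) = (\<Sum>i\<in>I. \<Sum>w\<in>W. \<Sum>j\<in>J. \<Sum>e\<in>E. F i j w e)"
    by (rule sum.cong[OF refl], rule sum.swap)
  also have "\<dots> = (\<Sum>w\<in>W. \<Sum>i\<in>I. \<Sum>j\<in>J. \<Sum>e\<in>E. F i j w e)" by (rule sum.swap)
  also have "\<dots> = (\<Sum>w\<in>W. \<Sum>i\<in>I. \<Sum>e\<in>E. \<Sum>j\<in>J. F i j w e)"
    by (rule sum.cong[OF refl], rule sum.cong[OF refl], rule sum.swap)
  also have "\<dots> = (\<Sum>w\<in>W. \<Sum>e\<in>E. \<Sum>i\<in>I. \<Sum>j\<in>J. F i j w e)"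
    by (rule sum.cong[OF refl], rule sum.swap)
  finally show ?thesis .
qed

lemma rs2_sum_inner:
  "rs2_sum (sig_inner k \<gamma> \<sigma> a) \<gamma> \<sigma> p \<tau> q \<rho> =
    (\<Sum>w\<in>words k. \<Sum>e\<in>Basis. rs_sum (sig_coord \<gamma> a w) (\<lambda>u. \<gamma> u \<bullet> e) p \<tau> * rs_sum (sig_coord \<sigma> a w) (\<lambda>u. \<sigma> u \<bullet> e) q \<rho>)"
proof -
  define X where "X w i = sig_coord \<gamma> a w (\<tau> i)" for w i
  define Y where "Y w j = sig_coord \<sigma> a w (\<rho> j)" for w j
  define A where "A i e = \<gamma> (p ! Suc i) \<bullet> e - \<gamma> (p ! i) \<bullet> e" for i e
  define B where "B j e = \<sigma> (q ! Suc j) \<bullet> e - \<sigma> (q ! j) \<bullet> e" for j e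
  have inn: "(\<gamma> (p ! Suc i) - \<gamma> (p ! i)) \<bullet> (\<sigma> (q ! Suc j) - \<sigma> (q ! j)) = (\<Sum>e\<in>Basis. A i e * B j e)" for i j
    unfolding A_def B_def by (subst euclidean_inner) (simp add: inner_diff_left)
  have "rs2_sum (sig_inner k \<gamma> \<sigma> a) \<gamma> \<sigma> p \<tau> q \<rho> =
      (\<Sum>i<length p - 1. \<Sum>j<length q - 1. (\<Sum>w\<in>words k. X w i * Y w j) * (\<Sum>e\<in>Basis. A i e * B j e))"
    unfolding rs2_sum_def sig_inner_def X_def Y_def inn by simp
  also have "\<dots> = (\<Sum>i<length p - 1. \<Sum>j<length q - 1. \<Sum>w\<in>words k. \<Sum>e\<in>Basis. (X w i * A i e) * (Y w j * B j e))"
    by (simp only: sum_product) (simp add: mult_ac)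
  also have "\<dots> = (\<Sum>w\<in>words k. \<Sum>e\<in>Basis. \<Sum>i<length p - 1. \<Sum>j<length q - 1. (X w i * A i e) * (Y w j * B j e))"
    by (rule swap4)
  also have "\<dots> = (\<Sum>w\<in>words k. \<Sum>e\<in>Basis. (\<Sum>i<length p - 1. X w i * A i e) * (\<Sum>j<length q - 1. Y w j * B j e))"
    by (simp add: sum_product)
  also have "\<dots> = (\<Sum>w\<in>words k. \<Sum>e\<in>Basis. rs_sum (sig_coord \<gamma> a w) (\<lambda>u. \<gamma> u \<bullet> e) p \<tau> * rs_sum (sig_coord \<sigma> a w) (\<lambda>u. \<sigma> u \<bullet> e) q \<rho>)"
    unfolding rs_sum_def X_def Y_def A_def B_def by simp
  finally show ?thesis .
qed

lemma rs2_sum_lin: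
  "rs2_sum (\<lambda>u v. \<Sum>k\<in>S. c k * K k u v) \<gamma> \<sigma> p \<tau> q \<rho> = (\<Sum>k\<in>S. c k * rs2_sum (K k) \<gamma> \<sigma> p \<tau> q \<rho>)"
proof -
  have "rs2_sum (\<lambda>u v. \<Sum>k\<in>S. c k * K k u v) \<gamma> \<sigma> p \<tau> q \<rho> =
     (\<Sum>i<length p - 1. \<Sum>j<length q - 1. \<Sum>k\<in>S. c k * (K k (\<tau> i) (\<rho> j) * ((\<gamma> (p ! Suc i) - \<gamma> (p ! i)) \<bullet> (\<sigma> (q ! Suc j) - \<sigma> (q ! j)))))"
    unfolding rs2_sum_def by (simp add: sum_distrib_right mult_ac)
  also have "\<dots> = (\<Sum>k\<in>S. \<Sum>i<length p - 1. \<Sum>j<length q - 1. c k * (K k (\<tau> i) (\<rho> j) * ((\<gamma> (p ! Suc i) - \<gamma> (p ! i)) \<bullet> (\<sigma> (q ! Suc j) - \<sigma> (q ! j)))))"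
  proof -
    have "(\<Sum>i<length p - 1. \<Sum>j<length q - 1. \<Sum>k\<in>S. c k * (K k (\<tau> i) (\<rho> j) * ((\<gamma> (p ! Suc i) - \<gamma> (p ! i)) \<bullet> (\<sigma> (q ! Suc j) - \<sigma> (q ! j)))))
      = (\<Sum>i<length p - 1. \<Sum>k\<in>S. \<Sum>j<length q - 1. c k * (K k (\<tau> i) (\<rho> j) * ((\<gamma> (p ! Suc i) - \<gamma> (p ! i)) \<bullet> (\<sigma> (q ! Suc j) - \<sigma> (q ! j)))))"
      by (rule sum.cong[OF refl], rule sum.swap)
    also have "\<dots> = (\<Sum>k\<in>S. \<Sum>i<length p - 1. \<Sum>j<length q - 1. c k * (K k (\<tau> i) (\<rho> j) * ((\<gamma> (p ! Suc i) - \<gamma> (p ! i)) \<bullet> (\<sigma> (q ! Suc j) - \<sigma> (q ! j)))))"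
      by (rule sum.swap)
    finally show ?thesis .
  qed
  also have "\<dots> = (\<Sum>k\<in>S. c k * rs2_sum (K k) \<gamma> \<sigma> p \<tau> q \<rho>)"
    unfolding rs2_sum_def by (simp add: sum_distrib_left)
  finally show ?thesis .
qed

lemma rs2_sum_diff:
  "rs2_sum K \<gamma> \<sigma> p \<tau> q \<rho> - rs2_sum K' \<gamma> \<sigma> p \<tau> q \<rho> = rs2_sum (\<lambda>u v. K u v - K' u v) \<gamma> \<sigma> p \<tau> q \<rho>"
  unfolding rs2_sum_def by (simp add: sum_subtractf left_diff_distrib)

lemma rs2_bound:
  assumes "\<forall>i<length p - 1. \<forall>j<length q - 1. \<bar>K (\<tau> i) (\<rho> j)\<bar> \<le> B" "0 \<le> B"
  shows "\<bar>rs2_sum K \<gamma> \<sigma> p \<tau> q \<rho>\<bar> \<le> B * vsum \<gamma> p * vsum \<sigma> q"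
proof -
  have "\<bar>rs2_sum K \<gamma> \<sigma> p \<tau> q \<rho>\<bar> \<le> (\<Sum>i<length p - 1. \<bar>\<Sum>j<length q - 1. K (\<tau> i) (\<rho> j) * ((\<gamma> (p ! Suc i) - \<gamma> (p ! i)) \<bullet> (\<sigma> (q ! Suc j) - \<sigma> (q ! j)))\<bar>)"
    unfolding rs2_sum_def by (rule sum_abs)
  also have "\<dots> \<le> (\<Sum>i<length p - 1. \<Sum>j<length q - 1. \<bar>K (\<tau> i) (\<rho> j) * ((\<gamma> (p ! Suc i) - \<gamma> (p ! i)) \<bullet> (\<sigma> (q ! Suc j) - \<sigma> (q ! j)))\<bar>)"
    by (intro sum_mono sum_abs)
  also have "\<dots> \<le> (\<Sum>i<length p - 1. \<Sum>j<length q - 1. B * (norm (\<gamma> (p ! Suc i) - \<gamma> (p ! i)) * norm (\<sigma> (q ! Suc j) - \<sigma> (q ! j))))"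
  proof (intro sum_mono)
    fix i j assume i: "i \<in> {..<length p - 1}" and j: "j \<in> {..<length q - 1}"
    have "\<bar>K (\<tau> i) (\<rho> j) * ((\<gamma> (p ! Suc i) - \<gamma> (p ! i)) \<bullet> (\<sigma> (q ! Suc j) - \<sigma> (q ! j)))\<bar>
        = \<bar>K (\<tau> i) (\<rho> j)\<bar> * \<bar>(\<gamma> (p ! Suc i) - \<gamma> (p ! i)) \<bullet> (\<sigma> (q ! Suc j) - \<sigma> (q ! j))\<bar>" by (simp add: abs_mult)
    also have "\<dots> \<le> B * (norm (\<gamma> (p ! Suc i) - \<gamma> (p ! i)) * norm (\<sigma> (q ! Suc j) - \<sigma> (q ! j)))"
      using assms i j by (intro mult_mono Cauchy_Schwarz_ineq2) auto
    finally show "\<bar>K (\<tau> i) (\<rho> j) * ((\<gamma> (p ! Suc i) - \<gamma> (p ! i)) \<bullet> (\<sigma> (q ! Suc j) - \<sigma> (q ! j)))\<bar>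
        \<le> B * (norm (\<gamma> (p ! Suc i) - \<gamma> (p ! i)) * norm (\<sigma> (q ! Suc j) - \<sigma> (q ! j)))" .
  qed
  also have "\<dots> = B * vsum \<gamma> p * vsum \<sigma> q"
    unfolding vsum_def by (simp add: sum_product sum_distrib_left mult_ac)
  finally show ?thesis .
qed

lemma words_Suc:
  "words (Suc k) = (\<lambda>(w, e). w @ [e]) ` (words k \<times> (Basis :: 'v::euclidean_space set))"
proof
  show "words (Suc k) \<subseteq> (\<lambda>(w, e). w @ [e]) ` (words k \<times> (Basis :: 'v set))"
  proof
    fix x :: "'v list" assume "x \<in> words (Suc k)"
    then have x: "length x = Suc k" "set x \<subseteq> Basis" unfolding words_def by auto
    then obtain y ys where "x = ys @ [y]" "length ys = k" unfolding length_Suc_conv_rev by blast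
    then show "x \<in> (\<lambda>(w, e). w @ [e]) ` (words k \<times> Basis)"
      using x unfolding words_def by (auto intro!: image_eqI[of _ _ "(ys, y)"])
  qed
next
  show "(\<lambda>(w, e). w @ [e]) ` (words k \<times> (Basis :: 'v set)) \<subseteq> words (Suc k)"
    unfolding words_def by auto
qed

lemma words_finite: "finite (words k :: 'v::euclidean_space list set)"
proof -
  have "words k = {xs. set xs \<subseteq> (Basis :: 'v set) \<and> length xs = k}" unfolding words_def by auto
  then show ?thesis using finite_lists_length_eq[of "Basis :: 'v set" k] by simp
qed

lemma words_card: "card (words k :: 'v::euclidean_space list set) = DIM('v) ^ k"
proof -
  have "words k = {xs. set xs \<subseteq> (Basis :: 'v set) \<and> length xs = k}" unfolding words_def by auto
  then show ?thesis using card_lists_length_eq[of "Basis :: 'v set" k] by simp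
qed

lemma sig_coord_snoc:
  "sig_coord \<gamma> a (w @ [e]) s = rs_integral (sig_coord \<gamma> a w) (\<lambda>u. \<gamma> u \<bullet> e) a s"
proof -
  have "sig_coord \<gamma> a w = sig_rev \<gamma> a (rev w)" by (simp add: fun_eq_iff sig_coord_def)
  then show ?thesis by (simp add: sig_coord_def)
qed

lemma sig_inner_Suc:
  fixes \<gamma> \<sigma> :: "real \<Rightarrow> 'v::euclidean_space"
  shows "sig_inner (Suc k) \<gamma> \<sigma> a s t =
    (\<Sum>w\<in>words k. \<Sum>e\<in>Basis. sig_coord \<gamma> a (w @ [e]) s * sig_coord \<sigma> a (w @ [e]) t)"
proof -
  have inj: "inj_on (\<lambda>(w, e). w @ [e]) (words k \<times> (Basis :: 'v set))"
    by (auto simp: inj_on_def)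
  have "sig_inner (Suc k) \<gamma> \<sigma> a s t = (\<Sum>x\<in>(\<lambda>(w, e). w @ [e]) ` (words k \<times> (Basis :: 'v set)). sig_coord \<gamma> a x s * sig_coord \<sigma> a x t)"
    unfolding sig_inner_def words_Suc ..
  also have "\<dots> = (\<Sum>(w, e)\<in>words k \<times> Basis. sig_coord \<gamma> a (w @ [e]) s * sig_coord \<sigma> a (w @ [e]) t)"
    by (subst sum.reindex[OF inj]) (simp add: case_prod_beta comp_def)
  also have "\<dots> = (\<Sum>w\<in>words k. \<Sum>e\<in>Basis. sig_coord \<gamma> a (w @ [e]) s * sig_coord \<sigma> a (w @ [e]) t)"
    by (rule sum.cartesian_product[symmetric])
  finally show ?thesis .
qed

lemma sig_inner_0:
  fixes \<gamma> \<sigma> :: "real \<Rightarrow> 'v::euclidean_space"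
  shows "sig_inner 0 \<gamma> \<sigma> a s t = 1"
proof -
  have "(words 0 :: 'v list set) = {[]}" unfolding words_def by auto
  then show ?thesis unfolding sig_inner_def sig_coord_def by simp
qed

context
  fixes \<gamma> :: "real \<Rightarrow> 'v::euclidean_space" and a b M :: real
  assumes cont: "continuous_on {a..b} \<gamma>" and M: "\<forall>p. is_partition p a b \<longrightarrow> vsum \<gamma> p \<le> M"
begin

lemma coord_cont: "w \<in> words k \<Longrightarrow> continuous_on {a..b} (sig_coord \<gamma> a w)"
proof -
  assume w: "w \<in> words k"
  have "sig_coord \<gamma> a w = sig_rev \<gamma> a (rev w)" by (simp add: fun_eq_iff sig_coord_def)
  then show ?thesis using sig_rev_props[OF cont M, of "rev w"] w unfolding words_def by simp
qed

lemma coord_has: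
  assumes w: "w \<in> words k" and e: "e \<in> Basis" and s: "s \<in> {a..b}"
  shows "has_rs_integral (sig_coord \<gamma> a w) (\<lambda>u. \<gamma> u \<bullet> e) a s (sig_coord \<gamma> a (w @ [e]) s)"
  unfolding sig_coord_snoc using rs_int_step[OF cont M coord_cont[OF w] e s] .

lemma coord_bound:
  assumes w: "w \<in> words k" and u: "u \<in> {a..b}"
  shows "\<bar>sig_coord \<gamma> a w u\<bar> \<le> M ^ k / fact k"
proof -
  have "sig_coord \<gamma> a w = sig_rev \<gamma> a (rev w)" by (simp add: fun_eq_iff sig_coord_def)
  moreover have "\<bar>sig_rev \<gamma> a (rev w) u\<bar> \<le> vf \<gamma> a u ^ length (rev w) / fact (length (rev w))"
    using sig_rev_props[OF cont M, of "rev w"] w u unfolding words_def by auto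
  moreover have "length (rev w) = k" using w unfolding words_def by simp
  moreover have "vf \<gamma> a u ^ k \<le> M ^ k"
    using vf_nonneg[OF M, of u] vf_le[OF M, of u] u by (intro power_mono) auto
  ultimately show ?thesis by (simp add: divide_right_mono order_trans)
qed

end

context
  fixes \<gamma> \<sigma> :: "real \<Rightarrow> 'v::euclidean_space" and a b Mg Ms :: real
  assumes contg: "continuous_on {a..b} \<gamma>" and Mg: "\<forall>p. is_partition p a b \<longrightarrow> vsum \<gamma> p \<le> Mg"
    and conts: "continuous_on {a..b} \<sigma>" and Ms: "\<forall>p. is_partition p a b \<longrightarrow> vsum \<sigma> p \<le> Ms"
begin

lemma inner_bound:
  assumes u: "u \<in> {a..b}" and v: "v \<in> {a..b}"
  shows "\<bar>sig_inner k \<gamma> \<sigma> a u v\<bar> \<le> (real DIM('v) * Mg * Ms) ^ k / (fact k)\<^sup>2"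
proof -
  have "\<bar>sig_inner k \<gamma> \<sigma> a u v\<bar> \<le> (\<Sum>w\<in>words k. \<bar>sig_coord \<gamma> a w u * sig_coord \<sigma> a w v\<bar>)"
    unfolding sig_inner_def by (rule sum_abs)
  also have "\<dots> \<le> (\<Sum>w\<in>(words k :: 'v list set). Mg ^ k / fact k * (Ms ^ k / fact k))"
  proof (rule sum_mono)
    fix w :: "'v list" assume w: "w \<in> words k"
    have 1: "\<bar>sig_coord \<gamma> a w u\<bar> \<le> Mg ^ k / fact k" by (rule coord_bound[OF contg Mg w u])
    have 2: "\<bar>sig_coord \<sigma> a w v\<bar> \<le> Ms ^ k / fact k" by (rule coord_bound[OF conts Ms w v])
    show "\<bar>sig_coord \<gamma> a w u * sig_coord \<sigma> a w v\<bar> \<le> Mg ^ k / fact k * (Ms ^ k / fact k)"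
      unfolding abs_mult using 1 2 by (intro mult_mono) auto
  qed
  also have "\<dots> = real DIM('v) ^ k * (Mg ^ k / fact k * (Ms ^ k / fact k))"
    using words_card[where 'v='v, of k] by simp
  also have "\<dots> = (real DIM('v) * Mg * Ms) ^ k / (fact k)\<^sup>2"
    by (simp add: power_mult_distrib power2_eq_square)
  finally show ?thesis .
qed

lemma per_k:
  assumes s: "s \<in> {a..b}" and t: "t \<in> {a..b}"
  shows "((\<lambda>x. rs2F (sig_inner k \<gamma> \<sigma> a) \<gamma> \<sigma> x) \<longlongrightarrow> sig_inner (Suc k) \<gamma> \<sigma> a s t)
           (mesh_filter a s \<times>\<^sub>F mesh_filter a t)"
  unfolding rs2_sum_inner sig_inner_Suc
proof (intro tendsto_sum tendsto_mult)
  fix w :: "'v list" and e :: 'v assume w: "w \<in> words k" and e: "e \<in> Basis"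
  show "((\<lambda>x. rs_sum (sig_coord \<gamma> a w) (\<lambda>u. \<gamma> u \<bullet> e) (fst (fst x)) (snd (fst x))) \<longlongrightarrow> sig_coord \<gamma> a (w @ [e]) s)
      (mesh_filter a s \<times>\<^sub>F mesh_filter a t)"
    using filterlim_compose[OF has_rs_tendsto[OF coord_has[OF contg Mg w e s]] filterlim_fst] .
  show "((\<lambda>x. rs_sum (sig_coord \<sigma> a w) (\<lambda>u. \<sigma> u \<bullet> e) (fst (snd x)) (snd (snd x))) \<longlongrightarrow> sig_coord \<sigma> a (w @ [e]) t)
      (mesh_filter a s \<times>\<^sub>F mesh_filter a t)"
    using filterlim_compose[OF has_rs_tendsto[OF coord_has[OF conts Ms w e t]] filterlim_snd] .
qed

end

theorem mainTheorem4:
  fixes \<gamma> \<sigma> :: "real \<Rightarrow> 'v::euclidean_space"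
    and \<phi> :: "nat \<Rightarrow> real"
    and a b :: real
  assumes "continuous_on {a..b} \<gamma>" and "continuous_on {a..b} \<sigma>"
    and "bounded_variation_on \<gamma> a b" and "bounded_variation_on \<sigma> a b"
    and "\<And>C. C > 0 \<Longrightarrow> summable (\<lambda>k. C ^ k * \<bar>\<phi> k\<bar> / (fact k)\<^sup>2)"
    and "\<And>C. C > 0 \<Longrightarrow> summable (\<lambda>k. C ^ k * \<bar>\<phi> (Suc k)\<bar> / (fact k)\<^sup>2)"
  shows "(\<forall>s\<in>{a..b}. \<forall>t\<in>{a..b}.
            summable (sig_kernel_terms \<phi> \<gamma> \<sigma> a s t) \<and>
            summable (sig_kernel_terms (\<lambda>k. \<phi> (Suc k)) \<gamma> \<sigma> a s t)) \<and>
         (\<forall>s\<in>{a..b}. \<forall>t\<in>{a..b}.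
            has_rs2_integral (sig_kernel (\<lambda>k. \<phi> (Suc k)) \<gamma> \<sigma> a) \<gamma> \<sigma> a s a t
              (sig_kernel \<phi> \<gamma> \<sigma> a s t - \<phi> 0))"
proof (cases "a \<le> b")
  case False
  then show ?thesis by simp
next
  case ab: True
  note contg = assms(1) and conts = assms(2)
  obtain Mg where Mg: "\<forall>p. is_partition p a b \<longrightarrow> vsum \<gamma> p \<le> Mg"
    using assms(3) unfolding bounded_variation_on_def vsum_def by blast
  obtain Ms where Ms: "\<forall>p. is_partition p a b \<longrightarrow> vsum \<sigma> p \<le> Ms"
    using assms(4) unfolding bounded_variation_on_def vsum_def by blast
  obtain p0 where p0: "is_partition p0 a b" using part_exists[OF ab] by blast
  have Mg0: "Mg \<ge> 0" using Mg p0 vsum_nonneg[of \<gamma> p0] by force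
  have Ms0: "Ms \<ge> 0" using Ms p0 vsum_nonneg[of \<sigma> p0] by force
  define C0 where "C0 = real DIM('v) * Mg * Ms"
  define C where "C = C0 + 1"
  have C00: "C0 \<ge> 0" unfolding C0_def using Mg0 Ms0 by simp
  have Cpos: "C > 0" unfolding C_def using C00 by simp
  have ib: "\<bar>sig_inner k \<gamma> \<sigma> a u v\<bar> \<le> C ^ k / (fact k)\<^sup>2" if u: "u \<in> {a..b}" and v: "v \<in> {a..b}" for k u v
  proof -
    have "\<bar>sig_inner k \<gamma> \<sigma> a u v\<bar> \<le> C0 ^ k / (fact k)\<^sup>2"
      unfolding C0_def by (rule inner_bound[OF contg Mg conts Ms u v])
    also have "\<dots> \<le> C ^ k / (fact k)\<^sup>2"
      unfolding C_def using C00 by (intro divide_right_mono power_mono) auto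
    finally show ?thesis .
  qed
  define G1 where "G1 k = C ^ k * \<bar>\<phi> k\<bar> / (fact k)\<^sup>2" for k
  define G2 where "G2 k = C ^ k * \<bar>\<phi> (Suc k)\<bar> / (fact k)\<^sup>2" for k
  have S1: "summable G1" unfolding G1_def using assms(5)[OF Cpos] .
  have S2: "summable G2" unfolding G2_def using assms(6)[OF Cpos] .
  have G2nn: "G2 k \<ge> 0" for k unfolding G2_def using Cpos by simp
  have tb1: "norm (sig_kernel_terms \<phi> \<gamma> \<sigma> a u v k) \<le> G1 k" if u: "u \<in> {a..b}" and v: "v \<in> {a..b}" for k u v
  proof -
    have "norm (sig_kernel_terms \<phi> \<gamma> \<sigma> a u v k) = \<bar>\<phi> k\<bar> * \<bar>sig_inner k \<gamma> \<sigma> a u v\<bar>"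
      unfolding sig_kernel_terms_def by (simp add: abs_mult)
    also have "\<dots> \<le> \<bar>\<phi> k\<bar> * (C ^ k / (fact k)\<^sup>2)" using ib[OF u v] by (intro mult_left_mono) auto
    also have "\<dots> = G1 k" unfolding G1_def by simp
    finally show ?thesis .
  qed
  have tb2: "norm (sig_kernel_terms (\<lambda>k. \<phi> (Suc k)) \<gamma> \<sigma> a u v k) \<le> G2 k" if u: "u \<in> {a..b}" and v: "v \<in> {a..b}" for k u v
  proof -
    have "norm (sig_kernel_terms (\<lambda>k. \<phi> (Suc k)) \<gamma> \<sigma> a u v k) = \<bar>\<phi> (Suc k)\<bar> * \<bar>sig_inner k \<gamma> \<sigma> a u v\<bar>"
      unfolding sig_kernel_terms_def by (simp add: abs_mult)
    also have "\<dots> \<le> \<bar>\<phi> (Suc k)\<bar> * (C ^ k / (fact k)\<^sup>2)" using ib[OF u v] by (intro mult_left_mono) auto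
    also have "\<dots> = G2 k" unfolding G2_def by simp
    finally show ?thesis .
  qed
  have sum1: "summable (sig_kernel_terms \<phi> \<gamma> \<sigma> a u v)" if "u \<in> {a..b}" "v \<in> {a..b}" for u v
    by (rule summable_comparison_test'[OF S1 tb1[OF that]])
  have sum2: "summable (sig_kernel_terms (\<lambda>k. \<phi> (Suc k)) \<gamma> \<sigma> a u v)" if "u \<in> {a..b}" "v \<in> {a..b}" for u v
    by (rule summable_comparison_test'[OF S2 tb2[OF that]])
  define tail where "tail n = (\<Sum>k. G2 (k + n))" for n
  define Kn where "Kn n u v = (\<Sum>k<n. \<phi> (Suc k) * sig_inner k \<gamma> \<sigma> a u v)" for n u v
  have tailb: "\<bar>sig_kernel (\<lambda>k. \<phi> (Suc k)) \<gamma> \<sigma> a u v - Kn n u v\<bar> \<le> tail n"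
    if u: "u \<in> {a..b}" and v: "v \<in> {a..b}" for n u v
  proof -
    define T where "T = sig_kernel_terms (\<lambda>k. \<phi> (Suc k)) \<gamma> \<sigma> a u v"
    have sT: "summable T" unfolding T_def by (rule sum2[OF u v])
    have "sig_kernel (\<lambda>k. \<phi> (Suc k)) \<gamma> \<sigma> a u v = (\<Sum>k. T (k + n)) + (\<Sum>k<n. T k)"
      unfolding sig_kernel_def T_def[symmetric] by (rule suminf_split_initial_segment[OF sT])
    moreover have "Kn n u v = (\<Sum>k<n. T k)" unfolding Kn_def T_def sig_kernel_terms_def by simp
    ultimately have eq: "sig_kernel (\<lambda>k. \<phi> (Suc k)) \<gamma> \<sigma> a u v - Kn n u v = (\<Sum>k. T (k + n))" by simp
    have sG: "summable (\<lambda>k. G2 (k + n))" by (rule summable_ignore_initial_segment[OF S2])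
    have bnd: "norm (T (k + n)) \<le> G2 (k + n)" for k unfolding T_def by (rule tb2[OF u v])
    have sN: "summable (\<lambda>k. norm (T (k + n)))"
      by (rule summable_comparison_test'[OF sG]) (use bnd in auto)
    have "norm (\<Sum>k. T (k + n)) \<le> (\<Sum>k. norm (T (k + n)))" by (rule summable_norm[OF sN])
    also have "\<dots> \<le> (\<Sum>k. G2 (k + n))" by (rule suminf_le[OF bnd sN sG])
    finally show ?thesis unfolding eq tail_def by simp
  qed
  have tail0: "tail \<longlonglongrightarrow> 0"
    unfolding LIMSEQ_iff tail_def
  proof (intro allI impI)
    fix r :: real assume "r > 0"
    then obtain N where "\<forall>n\<ge>N. norm (\<Sum>i. G2 (i + n)) < r" using suminf_exist_split[OF _ S2] by blast
    then show "\<exists>no. \<forall>n\<ge>no. norm ((\<Sum>k. G2 (k + n)) - 0) < r" by auto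
  qed
  have tailnn: "tail n \<ge> 0" for n
    unfolding tail_def using summable_ignore_initial_segment[OF S2] G2nn by (intro suminf_nonneg) auto
  show ?thesis
  proof (intro conjI ballI)
    fix s t assume s: "s \<in> {a..b}" and t: "t \<in> {a..b}"
    show "summable (sig_kernel_terms \<phi> \<gamma> \<sigma> a s t)" by (rule sum1[OF s t])
    show "summable (sig_kernel_terms (\<lambda>k. \<phi> (Suc k)) \<gamma> \<sigma> a s t)" by (rule sum2[OF s t])
  next
    fix s t assume s: "s \<in> {a..b}" and t: "t \<in> {a..b}"
    define F where "F = mesh_filter a s \<times>\<^sub>F mesh_filter a t"
    define In where "In n = (\<Sum>k<n. \<phi> (Suc k) * sig_inner (Suc k) \<gamma> \<sigma> a s t)" for n
    show "has_rs2_integral (sig_kernel (\<lambda>k. \<phi> (Suc k)) \<gamma> \<sigma> a) \<gamma> \<sigma> a s a t (sig_kernel \<phi> \<gamma> \<sigma> a s t - \<phi> 0)"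
    proof (rule tendsto_rs2, fold F_def, rule unif_limit)
      fix n
      show "((\<lambda>x. rs2F (Kn n) \<gamma> \<sigma> x) \<longlongrightarrow> In n) F"
        unfolding Kn_def[abs_def] rs2_sum_lin In_def F_def
        by (intro tendsto_sum tendsto_mult_left per_k[OF contg Mg conts Ms s t])
    next
      define T where "T = sig_kernel_terms \<phi> \<gamma> \<sigma> a s t"
      have sT: "summable T" unfolding T_def by (rule sum1[OF s t])
      have "(\<lambda>n. \<Sum>k<n. T (Suc k)) \<longlonglongrightarrow> (\<Sum>k. T (Suc k))"
        by (rule summable_LIMSEQ) (simp add: summable_Suc_iff sT)
      moreover have "(\<Sum>k. T (Suc k)) = sig_kernel \<phi> \<gamma> \<sigma> a s t - \<phi> 0"
        unfolding suminf_split_head[OF sT] unfolding T_def sig_kernel_def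
        by (simp add: sig_kernel_terms_def sig_inner_0)
      moreover have "In = (\<lambda>n. \<Sum>k<n. T (Suc k))"
        unfolding In_def T_def sig_kernel_terms_def by simp
      ultimately show "In \<longlonglongrightarrow> sig_kernel \<phi> \<gamma> \<sigma> a s t - \<phi> 0" by simp
    next
      show "(\<lambda>n. tail n * (Mg * Ms)) \<longlonglongrightarrow> 0"
        by (rule tendsto_mult_left_zero[OF tail0])
    next
      fix n
      have evp: "eventually (\<lambda>x. is_partition (fst x) a s \<and> partition_tags (fst x) (snd x)) (mesh_filter a s)"
        by (rule ev_part)
      have evq: "eventually (\<lambda>x. is_partition (fst x) a t \<and> partition_tags (fst x) (snd x)) (mesh_filter a t)"
        by (rule ev_part)
      show "eventually (\<lambda>x. \<bar>rs2F (sig_kernel (\<lambda>k. \<phi> (Suc k)) \<gamma> \<sigma> a) \<gamma> \<sigma> x - rs2F (Kn n) \<gamma> \<sigma> x\<bar> \<le> tail n * (Mg * Ms)) F"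
        unfolding F_def eventually_prod_filter
      proof (intro exI conjI allI impI)
        show "eventually (\<lambda>x. is_partition (fst x) a s \<and> partition_tags (fst x) (snd x)) (mesh_filter a s)" by (rule evp)
        show "eventually (\<lambda>x. is_partition (fst x) a t \<and> partition_tags (fst x) (snd x)) (mesh_filter a t)" by (rule evq)
        fix x y assume x: "is_partition (fst x) a s \<and> partition_tags (fst x) (snd x)"
          and y: "is_partition (fst y) a t \<and> partition_tags (fst y) (snd y)"
        obtain p \<tau> where xe: "x = (p, \<tau>)" by (cases x)
        obtain q \<rho> where ye: "y = (q, \<rho>)" by (cases y)
        have p: "is_partition p a s" "partition_tags p \<tau>" using x xe by auto
        have q: "is_partition q a t" "partition_tags q \<rho>" using y ye by auto
        have "\<bar>rs2_sum (sig_kernel (\<lambda>k. \<phi> (Suc k)) \<gamma> \<sigma> a) \<gamma> \<sigma> p \<tau> q \<rho> - rs2_sum (Kn n) \<gamma> \<sigma> p \<tau> q \<rho>\<bar>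
            = \<bar>rs2_sum (\<lambda>u v. sig_kernel (\<lambda>k. \<phi> (Suc k)) \<gamma> \<sigma> a u v - Kn n u v) \<gamma> \<sigma> p \<tau> q \<rho>\<bar>"
          by (simp only: rs2_sum_diff)
        also have "\<dots> \<le> tail n * vsum \<gamma> p * vsum \<sigma> q"
        proof (rule rs2_bound[OF _ tailnn])
          show "\<forall>i<length p - 1. \<forall>j<length q - 1. \<bar>sig_kernel (\<lambda>k. \<phi> (Suc k)) \<gamma> \<sigma> a (\<tau> i) (\<rho> j) - Kn n (\<tau> i) (\<rho> j)\<bar> \<le> tail n"
          proof (intro allI impI tailb)
            fix i j assume i: "i < length p - 1" and j: "j < length q - 1"
            show "\<tau> i \<in> {a..b}" using tag_in[OF p(1) p(2) i] s by auto
            show "\<rho> j \<in> {a..b}" using tag_in[OF q(1) q(2) j] t by auto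
          qed
        qed
        also have "\<dots> \<le> tail n * (Mg * Ms)"
        proof -
          have "vsum \<gamma> p \<le> Mg" using vsum_restrict[OF Mg p(1)] s by simp
          moreover have "vsum \<sigma> q \<le> Ms" using vsum_restrict[OF Ms q(1)] t by simp
          ultimately have "vsum \<gamma> p * vsum \<sigma> q \<le> Mg * Ms"
            using vsum_nonneg[of \<gamma> p] vsum_nonneg[of \<sigma> q] Ms0 by (intro mult_mono) auto
          then show ?thesis using tailnn[of n] by (simp add: mult.assoc mult_left_mono)
        qed
        finally show "\<bar>rs2F (sig_kernel (\<lambda>k. \<phi> (Suc k)) \<gamma> \<sigma> a) \<gamma> \<sigma> (x, y) - rs2F (Kn n) \<gamma> \<sigma> (x, y)\<bar> \<le> tail n * (Mg * Ms)"
          using xe ye by simp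
      qed
    qed
  qed
qed

end
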